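(* Let $\alpha\in(0,\pi/2]$ and let $(L,\theta)$, $\theta\in\mathcal{M}_{\alpha,L}$, be a minimizer of problem $(\mathcal{P}_\alpha)$. Let $x(s)=\int_0^s\cos\theta(u)\,du$ and $y(s)=-1+\int_0^s\sin\theta(u)\,du$. Then $\theta\in W^{2,\infty}(0,L)$ and there exist real constants $\lambda_1,\lambda_2,C$ such that $$\theta'(s)=\big(C-\lambda_1(y(s)+1)-\lambda_2x(s)\big)^-\qquad\text{for all }s\in[0,L),$$ where $t^-=\max(-t,0)$ denotes the negative part of a real number $t$.
   Context: For $\alpha\in(0,\pi/2]$ and $L>0$, let $\mathcal{M}_{\alpha,L}$ be the set of $\theta\in H^1(0,L)$ with $\theta'\ge 0$ a.e., $\theta(0)=0$, $\theta(L)=2\alpha$, $\int_0^L\cos\theta(u)\,du=\sin2\alpha$ and $\int_0^L\sin\theta(u)\,du=1-\cos2\alpha$ ($\theta$ is the tangent angle of a convex arc parametrized by arc length from $(0,-1)$ to $(\sin2\alpha,-\cos2\alpha)$). Problem $(\mathcal{P}_\alpha)$ is to minimize $\frac12\int_0^L\theta'(s)^2\,ds$ over all $L>0$ and $\theta\in\mathcal{M}_{\alpha,L}$. *)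

theory Defs
  imports "HOL-Analysis.Analysis"
begin

text \<open>H^1(0,L) membership with weak derivative g: g is in L^2(0,L) (hence in L^1(0,L))
  and theta is the (absolutely continuous) primitive of g on [0,L].\<close>
definition H1_with_deriv :: "real \<Rightarrow> (real \<Rightarrow> real) \<Rightarrow> (real \<Rightarrow> real) \<Rightarrow> bool" where
  "H1_with_deriv L \<theta> g \<longleftrightarrow>
     g \<in> borel_measurable lborel \<and>
     set_integrable lborel {0..L} g \<and>
     set_integrable lborel {0..L} (\<lambda>s. (g s)\<^sup>2) \<and>
     (\<forall>s\<in>{0..L}. \<theta> s = \<theta> 0 + (LINT u:{0..s}|lborel. g u))"

definition admissible :: "real \<Rightarrow> real \<Rightarrow> (real \<Rightarrow> real) \<Rightarrow> (real \<Rightarrow> real) \<Rightarrow> bool" where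
  "admissible \<alpha> L \<theta> g \<longleftrightarrow>
     H1_with_deriv L \<theta> g \<and>
     (AE s in lborel. s \<in> {0..L} \<longrightarrow> g s \<ge> 0) \<and>
     \<theta> 0 = 0 \<and> \<theta> L = 2 * \<alpha> \<and>
     (LINT u:{0..L}|lborel. cos (\<theta> u)) = sin (2 * \<alpha>) \<and>
     (LINT u:{0..L}|lborel. sin (\<theta> u)) = 1 - cos (2 * \<alpha>)"

definition energy :: "real \<Rightarrow> (real \<Rightarrow> real) \<Rightarrow> real" where
  "energy L g = (1/2) * (LINT s:{0..L}|lborel. (g s)\<^sup>2)"

definition is_minimizer :: "real \<Rightarrow> real \<Rightarrow> (real \<Rightarrow> real) \<Rightarrow> (real \<Rightarrow> real) \<Rightarrow> bool" where
  "is_minimizer \<alpha> L \<theta> g \<longleftrightarrow>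
     L > 0 \<and> admissible \<alpha> L \<theta> g \<and>
     (\<forall>L' \<theta>' g'. L' > 0 \<longrightarrow> admissible \<alpha> L' \<theta>' g' \<longrightarrow> energy L g \<le> energy L' g')"

definition neg_part :: "real \<Rightarrow> real" where
  "neg_part t = max (- t) 0"

end

theory Submission
  imports Defs
begin

definition Th :: "(real \<Rightarrow> real) \<Rightarrow> real \<Rightarrow> real" where
  "Th f s = (LINT u:{0..s}|lborel. f u)"

lemma si_sub: "set_integrable lborel {0..L} f \<Longrightarrow> 0 \<le> a \<Longrightarrow> b \<le> L \<Longrightarrow> set_integrable lborel {a..b} (f::real\<Rightarrow>real)"
  by (rule set_integrable_subset) auto

lemma Th_eq: assumes "set_integrable lborel {0..L} f" "0 \<le> s" "s \<le> L"
  shows "Th f s = integral {0..s} f"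
  unfolding Th_def using si_sub[OF assms(1) order_refl assms(3)]
  by (rule set_borel_integral_eq_integral)

lemma si_int: assumes "set_integrable lborel {0..L} (f::real\<Rightarrow>real)" "0 \<le> a" "b \<le> L"
  shows "f integrable_on {a..b}" "(LINT u:{a..b}|lborel. f u) = integral {a..b} f"
  using set_borel_integral_eq_integral si_sub[OF assms] by auto

lemma Th_cont: assumes "set_integrable lborel {0..L} f"
  shows "continuous_on {0..L} (Th f)"
proof -
  have "continuous_on {0..L} (\<lambda>x. integral {0..x} f)"
    by (rule indefinite_integral_continuous_1) (use si_int[OF assms order_refl order_refl] in auto)
  then show ?thesis by (rule continuous_on_eq) (use Th_eq[OF assms] in auto)
qed

lemma Th_diff: assumes "set_integrable lborel {0..L} f" "0 \<le> a" "a \<le> b" "b \<le> L"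
  shows "Th f b - Th f a = (LINT u:{a..b}|lborel. f u)"
proof -
  have i: "f integrable_on {0..L}" using si_int[OF assms(1) order_refl order_refl] by auto
  have "integral {0..a} f + integral {a..b} f = integral {0..b} f"
    by (rule Henstock_Kurzweil_Integration.integral_combine) (use assms integrable_on_subinterval[OF i, of 0 b] in auto)
  then show ?thesis using Th_eq[OF assms(1)] si_int[OF assms(1), of a b] assms by auto
qed

lemma Th_deriv: assumes "continuous_on {0..L} f" "s \<in> {0..L}"
  shows "(Th f has_real_derivative f s) (at s within {0..L})"
proof -
  have si: "set_integrable lborel {0..L} f"
    unfolding set_integrable_def using borel_integrable_compact[OF compact_Icc assms(1)] by simp
  have "((\<lambda>x. integral {0..x} f) has_real_derivative f s) (at s within {0..L})"
    by (rule integral_has_real_derivative) (use assms in auto)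
  then show ?thesis
    by (rule has_field_derivative_transform_within[where d=1]) (use Th_eq[OF si] assms in auto)
qed

lemma fubini_Th:
  fixes \<phi> H :: "real \<Rightarrow> real"
  assumes \<phi>m: "\<phi> \<in> borel_measurable borel" and \<phi>i: "set_integrable lborel {0..L} \<phi>"
    and Hm: "H \<in> borel_measurable borel" and Hb: "\<And>u. \<bar>H u\<bar> \<le> B" and L0: "0 \<le> L"
  shows "(LINT u:{0..L}|lborel. H u * Th \<phi> u) = (LINT t:{0..L}|lborel. \<phi> t * (LINT u:{t..L}|lborel. H u))"
proof -
  define P where "P t = indicator {0..L} t * \<phi> t" for t
  define F where "F t u = P t * (of_bool (t \<le> u \<and> u \<le> L) * H u)" for t u :: real
  have Pi: "integrable lborel P" using \<phi>i unfolding P_def set_integrable_def by simp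
  have Pm[measurable]: "P \<in> borel_measurable borel" unfolding P_def by measurable (use \<phi>m in auto)
  note [measurable] = \<phi>m Hm
  have Fm[measurable]: "case_prod F \<in> borel_measurable (lborel \<Otimes>\<^sub>M lborel)"
    unfolding F_def by measurable
  have B0: "0 \<le> B" using Hb[of 0] by simp
  have intI: "integrable lborel (\<lambda>u. of_bool (t \<le> u \<and> u \<le> L) * H u)" for t
  proof (rule Bochner_Integration.integrable_bound[where f="\<lambda>u. B * indicator {t..L} u"])
    show "integrable lborel (\<lambda>u. B * indicator {t..L} u)" by (intro integrable_mult_right integrable_real_indicator) (auto simp: emeasure_lborel_Icc_eq)
    show "(\<lambda>u. of_bool (t \<le> u \<and> u \<le> L) * H u) \<in> borel_measurable lborel" by measurable
    show "AE u in lborel. norm (of_bool (t \<le> u \<and> u \<le> L) * H u) \<le> norm (B * indicator {t..L} u)"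
      using Hb B0 by (auto simp: indicator_def)
  qed
  have bndI: "\<bar>\<integral>u. of_bool (t \<le> u \<and> u \<le> L) * \<bar>H u\<bar> \<partial>lborel\<bar> \<le> B * L" if "0 \<le> t" for t
  proof -
    have i2: "integrable lborel (\<lambda>u. of_bool (t \<le> u \<and> u \<le> L) * \<bar>H u\<bar>)"
      using integrable_abs[OF intI[of t]] by (simp add: abs_mult)
    have "(\<integral>u. of_bool (t \<le> u \<and> u \<le> L) * \<bar>H u\<bar> \<partial>lborel) \<le> (\<integral>u. B * indicator {t..L} u \<partial>lborel)"
    proof (rule integral_mono[OF i2])
      show "integrable lborel (\<lambda>u. B * indicator {t..L} u)" by (intro integrable_mult_right integrable_real_indicator) (auto simp: emeasure_lborel_Icc_eq)
    qed (use Hb in \<open>auto simp: indicator_def\<close>)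
    also have "\<dots> = B * measure lborel {t..L}" by (rule integral_mult_right_zero[THEN trans]) simp
    also have "\<dots> = B * (if t \<le> L then L - t else 0)" by simp
    also have "\<dots> \<le> B * L" using B0 that L0 by (auto intro: mult_left_mono)
    finally show ?thesis by (simp add: integral_nonneg_AE)
  qed
  have Fint: "integrable (lborel \<Otimes>\<^sub>M lborel) (case_prod F)"
  proof (rule lborel_pair.Fubini_integrable)
    show "case_prod F \<in> borel_measurable (lborel \<Otimes>\<^sub>M lborel)" by (rule Fm)
    show "AE t in lborel. integrable lborel (\<lambda>u. case_prod F (t, u))"
      unfolding F_def using intI by auto
    show "integrable lborel (\<lambda>t. \<integral>u. norm (case_prod F (t, u)) \<partial>lborel)"
    proof (rule Bochner_Integration.integrable_bound[where f="\<lambda>t. B * L * P t"])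
      show "integrable lborel (\<lambda>t. B * L * P t)" using Pi by simp
      show "(\<lambda>t. \<integral>u. norm (case_prod F (t, u)) \<partial>lborel) \<in> borel_measurable lborel"
        by measurable
      show "AE t in lborel. norm (\<integral>u. norm (case_prod F (t, u)) \<partial>lborel) \<le> norm (B * L * P t)"
      proof (rule AE_I2)
        fix t
        have "(\<integral>u. norm (case_prod F (t, u)) \<partial>lborel) = \<bar>P t\<bar> * (\<integral>u. of_bool (t \<le> u \<and> u \<le> L) * \<bar>H u\<bar> \<partial>lborel)"
          unfolding F_def by (simp add: abs_mult)
        moreover have "\<bar>P t\<bar> * \<bar>\<integral>u. of_bool (t \<le> u \<and> u \<le> L) * \<bar>H u\<bar> \<partial>lborel\<bar> \<le> \<bar>B * L * P t\<bar>"
        proof (cases "t \<in> {0..L}")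
          case True
          then have "\<bar>P t\<bar> * \<bar>\<integral>u. of_bool (t \<le> u \<and> u \<le> L) * \<bar>H u\<bar> \<partial>lborel\<bar> \<le> \<bar>P t\<bar> * (B * L)"
            by (intro mult_left_mono bndI) auto
          then show ?thesis using B0 True by (simp add: abs_mult mult_ac)
        next
          case False then show ?thesis by (simp add: P_def)
        qed
        ultimately show "norm (\<integral>u. norm (case_prod F (t, u)) \<partial>lborel) \<le> norm (B * L * P t)"
          by (simp add: abs_mult)
      qed
    qed
  qed
  have "(\<integral>u. (\<integral>t. F t u \<partial>lborel) \<partial>lborel) = (\<integral>t. (\<integral>u. F t u \<partial>lborel) \<partial>lborel)"
    by (rule lborel_pair.Fubini_integral[OF Fint])
  moreover have "(\<integral>t. F t u \<partial>lborel) = indicator {0..L} u * (H u * Th \<phi> u)" for u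
  proof -
    have "(\<lambda>t. F t u) = (\<lambda>t. (indicator {0..L} u * H u) * (indicator {0..u} t * \<phi> t))"
      by (auto simp: F_def P_def indicator_def)
    then have "(\<integral>t. F t u \<partial>lborel) = (indicator {0..L} u * H u) * (\<integral>t. indicator {0..u} t * \<phi> t \<partial>lborel)"
      by (simp only: integral_mult_right_zero)
    then show ?thesis by (simp add: Th_def set_lebesgue_integral_def)
  qed
  moreover have "(\<integral>u. F t u \<partial>lborel) = indicator {0..L} t * (\<phi> t * (LINT u:{t..L}|lborel. H u))" for t
  proof -
    have "(\<lambda>u. F t u) = (\<lambda>u. P t * (indicator {t..L} u * H u))"
      by (auto simp: F_def P_def indicator_def)
    then have "(\<integral>u. F t u \<partial>lborel) = P t * (\<integral>u. indicator {t..L} u * H u \<partial>lborel)"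
      by (simp only: integral_mult_right_zero)
    then show ?thesis by (simp add: set_lebesgue_integral_def P_def)
  qed
  ultimately show ?thesis by (simp add: set_lebesgue_integral_def)
qed

lemma sin_taylor1: "\<bar>sin b - b\<bar> \<le> (b::real)^2 / 2"
proof -
  have "\<bar>sin b - (\<Sum>m<2. sin_coeff m * b ^ m)\<bar> \<le> inverse (fact 2) * \<bar>b\<bar> ^ 2"
    by (rule Maclaurin_sin_bound)
  moreover have "(\<Sum>m<2. sin_coeff m * b ^ m) = b"
    by (simp add: numeral_2_eq_2 sin_coeff_Suc)
  ultimately show ?thesis by simp
qed

lemma cos_taylor1: "\<bar>cos b - 1\<bar> \<le> (b::real)^2 / 2"
proof -
  have "cos b = 1 - 2 * sin (b/2) ^ 2" using cos_double_sin[of "b/2"] by simp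
  moreover have "sin (b/2) ^ 2 \<le> (b/2)^2"
    using abs_sin_x_le_abs_x[of "b/2"] by (metis power2_abs power_mono abs_ge_zero)
  ultimately show ?thesis by (auto simp: power2_eq_square)
qed

lemma abs_mult_le1: "\<bar>x\<bar> \<le> 1 \<Longrightarrow> \<bar>y\<bar> \<le> B \<Longrightarrow> \<bar>x * y\<bar> \<le> (B::real)"
proof -
  assume a: "\<bar>x\<bar> \<le> 1" "\<bar>y\<bar> \<le> B"
  have "\<bar>x * y\<bar> = \<bar>x\<bar> * \<bar>y\<bar>" by (rule abs_mult)
  also have "\<dots> \<le> 1 * \<bar>y\<bar>" by (rule mult_right_mono) (use a in auto)
  finally show ?thesis using a by simp
qed

lemma cos_taylor: "\<bar>cos (a+b) - cos a + sin a * b\<bar> \<le> (b::real)^2"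
proof -
  have e: "cos (a+b) - cos a + sin a * b = cos a * (cos b - 1) - sin a * (sin b - b)"
    by (simp add: cos_add algebra_simps)
  have "\<bar>cos a * (cos b - 1)\<bar> \<le> b^2/2"
    using cos_taylor1[of b] abs_cos_le_one[of a]
    by (meson abs_mult_le1)
  moreover have "\<bar>sin a * (sin b - b)\<bar> \<le> b^2/2"
    using sin_taylor1[of b] abs_sin_le_one[of a]
    by (meson abs_mult_le1)
  ultimately show ?thesis unfolding e by linarith
qed

lemma sin_taylor: "\<bar>sin (a+b) - sin a - cos a * b\<bar> \<le> (b::real)^2"
proof -
  have e: "sin (a+b) - sin a - cos a * b = sin a * (cos b - 1) + cos a * (sin b - b)"
    by (simp add: sin_add algebra_simps)
  have "\<bar>sin a * (cos b - 1)\<bar> \<le> b^2/2"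
    using cos_taylor1[of b] abs_sin_le_one[of a]
    by (meson abs_mult_le1)
  moreover have "\<bar>cos a * (sin b - b)\<bar> \<le> b^2/2"
    using sin_taylor1[of b] abs_cos_le_one[of a]
    by (meson abs_mult_le1)
  ultimately show ?thesis unfolding e by linarith
qed

lemma norm_triple_le: "norm ((a::real),(b::real),(c::real)) \<le> \<bar>a\<bar> + \<bar>b\<bar> + \<bar>c\<bar>"
  by (smt (verit) norm_Pair_le real_norm_def)

lemma abs_le_norm_triple: "\<bar>a\<bar> \<le> norm ((a::real),(b::real),(c::real))"
  "\<bar>b\<bar> \<le> norm ((a::real),(b::real),(c::real))" "\<bar>c\<bar> \<le> norm ((a::real),(b::real),(c::real))"
proof -
  have n: "norm (a,b,c) = sqrt (a^2 + (b^2 + c^2))" by (simp add: norm_Pair)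
  have "sqrt (a^2) \<le> norm (a,b,c)" "sqrt (b^2) \<le> norm (a,b,c)" "sqrt (c^2) \<le> norm (a,b,c)"
    unfolding n by (rule real_sqrt_le_mono; simp)+
  then show "\<bar>a\<bar> \<le> norm ((a::real),(b::real),(c::real))"
    "\<bar>b\<bar> \<le> norm ((a::real),(b::real),(c::real))" "\<bar>c\<bar> \<le> norm ((a::real),(b::real),(c::real))"
    by auto
qed

definition L2 :: "real \<Rightarrow> (real \<Rightarrow> real) \<Rightarrow> bool" where
  "L2 L f \<longleftrightarrow> f \<in> borel_measurable borel \<and> set_integrable lborel {0..L} (\<lambda>s. (f s)^2)"

definition N1 :: "real \<Rightarrow> (real \<Rightarrow> real) \<Rightarrow> real" where
  "N1 L f = (LINT s:{0..L}|lborel. \<bar>f s\<bar>)"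

lemma ind_int: "integrable lborel (\<lambda>s::real. indicator {a..b} s :: real)"
  by (intro integrable_real_indicator) (auto simp: emeasure_lborel_Icc_eq)

lemma si_boundI:
  fixes f :: "real \<Rightarrow> real"
  assumes "set_integrable lborel A h" "f \<in> borel_measurable borel" "A \<in> sets borel"
    "\<And>s. s \<in> A \<Longrightarrow> \<bar>f s\<bar> \<le> h s"
  shows "set_integrable lborel A f"
  unfolding set_integrable_def
proof (rule Bochner_Integration.integrable_bound[where f="\<lambda>s. indicator A s *\<^sub>R h s"])
  show "integrable lborel (\<lambda>s. indicator A s *\<^sub>R h s)" using assms(1) unfolding set_integrable_def .
  show "(\<lambda>s. indicator A s *\<^sub>R f s) \<in> borel_measurable lborel" using assms(2,3) by measurable
  show "AE x in lborel. norm (indicator A x *\<^sub>R f x) \<le> norm (indicator A x *\<^sub>R h x)"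
    using assms(4) by (auto simp: indicator_def intro!: AE_I2) (meson abs_ge_self order_trans)
qed

lemma L2_L1: assumes "L2 L f" shows "set_integrable lborel {0..L} f"
proof (rule si_boundI[where h="\<lambda>s. 1 + (f s)^2"])
  have "set_integrable lborel {0..L} (\<lambda>s. 1::real)"
    unfolding set_integrable_def using ind_int[of 0 L] by simp
  then show "set_integrable lborel {0..L} (\<lambda>s. 1 + (f s)^2)"
    using assms unfolding L2_def by (intro set_integral_add) auto
  show "f \<in> borel_measurable borel" using assms unfolding L2_def by auto
  show "\<bar>f s\<bar> \<le> 1 + (f s)^2" for s
    using zero_le_power2[of "\<bar>f s\<bar> - 1"] abs_mult_self_eq[of "f s"] by (simp add: power2_eq_square algebra_simps)
qed auto

lemma L2_meas: "L2 L f \<Longrightarrow> f \<in> borel_measurable borel" by (simp add: L2_def)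

lemma two_ab_le: "2 * \<bar>a * b\<bar> \<le> a^2 + (b::real)^2"
proof -
  have "0 \<le> (\<bar>a\<bar> - \<bar>b\<bar>)^2" by simp
  then show ?thesis by (simp add: power2_eq_square algebra_simps abs_mult abs_mult_self_eq)
qed

lemma L2_prod: assumes "L2 L f" "L2 L h" shows "set_integrable lborel {0..L} (\<lambda>s. f s * h s)"
proof (rule si_boundI[where h="\<lambda>s. (f s)^2 + (h s)^2"])
  show "set_integrable lborel {0..L} (\<lambda>s. (f s)^2 + (h s)^2)"
    using assms unfolding L2_def by (intro set_integral_add) auto
  show "(\<lambda>s. f s * h s) \<in> borel_measurable borel" using assms unfolding L2_def by (auto intro!: borel_measurable_times borel_measurable_add borel_measurable_power borel_measurable_indicator)
  show "\<bar>f s * h s\<bar> \<le> (f s)^2 + (h s)^2" for s using two_ab_le[of "f s" "h s"] by simp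
qed auto

lemma L2_add: assumes "L2 L f" "L2 L h" shows "L2 L (\<lambda>s. f s + h s)"
  unfolding L2_def
proof
  show "(\<lambda>s. f s + h s) \<in> borel_measurable borel" using assms unfolding L2_def by (auto intro!: borel_measurable_times borel_measurable_add borel_measurable_power borel_measurable_indicator)
  show "set_integrable lborel {0..L} (\<lambda>s. (f s + h s)^2)"
  proof (rule si_boundI[where h="\<lambda>s. 2 * (f s)^2 + 2 * (h s)^2"])
    show "set_integrable lborel {0..L} (\<lambda>s. 2 * (f s)^2 + 2 * (h s)^2)"
      using assms unfolding L2_def by (intro set_integral_add set_integrable_mult_right) auto
    show "(\<lambda>s. (f s + h s)^2) \<in> borel_measurable borel" using assms unfolding L2_def by (auto intro!: borel_measurable_times borel_measurable_add borel_measurable_power borel_measurable_indicator)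
    show "\<bar>(f s + h s)^2\<bar> \<le> 2 * (f s)^2 + 2 * (h s)^2" for s
      using two_ab_le[of "f s" "h s"] by (simp add: power2_eq_square algebra_simps)
  qed auto
qed

lemma L2_cmult: assumes "L2 L f" shows "L2 L (\<lambda>s. c * f s)"
  using assms unfolding L2_def by (auto simp: power_mult_distrib)

lemma L2_diff: assumes "L2 L f" "L2 L h" shows "L2 L (\<lambda>s. f s - h s)"
  using L2_add[OF assms(1) L2_cmult[OF assms(2), of "-1"]] by simp

lemma L2_ind: assumes "L2 L f" shows "L2 L (\<lambda>s. f s * indicator {a..b} s)"
  unfolding L2_def
proof
  show "(\<lambda>s. f s * indicator {a..b} s) \<in> borel_measurable borel" using assms unfolding L2_def by (auto intro!: borel_measurable_times borel_measurable_add borel_measurable_power borel_measurable_indicator)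
  show "set_integrable lborel {0..L} (\<lambda>s. (f s * indicator {a..b} s)^2)"
    by (rule si_boundI[where h="\<lambda>s. (f s)^2"]) (use assms in \<open>auto simp: L2_def indicator_def\<close>)
qed

lemma L2_cont: assumes "continuous_on {0..L} q" shows "L2 L (\<lambda>s. indicator {0..L} s * q s)"
  unfolding L2_def
proof
  show m: "(\<lambda>s. indicator {0..L} s * q s) \<in> borel_measurable borel"
    using borel_measurable_continuous_on_indicator[OF _ assms] by simp
  have "continuous_on {0..L} (\<lambda>s. (q s)^2)" using assms by (intro continuous_intros)
  then have "set_integrable lborel {0..L} (\<lambda>s. (q s)^2)"
    unfolding set_integrable_def by (rule borel_integrable_compact[OF compact_Icc])
  then show "set_integrable lborel {0..L} (\<lambda>s. (indicator {0..L} s * q s)^2)"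
    by (rule set_integrable_cong[THEN iffD1, rotated -1]) (auto simp: indicator_def)
qed

lemma cont_si: fixes q :: "real \<Rightarrow> real" assumes "continuous_on {0..L} q" shows "set_integrable lborel {0..L} q"
  unfolding set_integrable_def using borel_integrable_compact[of "{0..L}" q] assms by auto

lemma Th_add: assumes "set_integrable lborel {0..L} f1" "set_integrable lborel {0..L} f2" "0 \<le> u" "u \<le> L"
  shows "Th (\<lambda>s. f1 s + f2 s) u = Th f1 u + Th f2 u"
  unfolding Th_def using si_sub[OF assms(1) order_refl assms(4)] si_sub[OF assms(2) order_refl assms(4)]
  by (rule set_integral_add)

lemma Th_cmult: "Th (\<lambda>s. c * f s) u = c * Th f u"
  unfolding Th_def by simp

lemma Th_bound: assumes "set_integrable lborel {0..L} f" "0 \<le> u" "u \<le> L"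
  shows "\<bar>Th f u\<bar> \<le> N1 L f"
proof -
  have i: "integrable lborel (\<lambda>s. indicator {0..u} s * f s)"
    using si_sub[OF assms(1) order_refl assms(3)] unfolding set_integrable_def by simp
  have iL: "integrable lborel (\<lambda>s. indicator {0..L} s * \<bar>f s\<bar>)"
    using set_integrable_abs[OF assms(1)] unfolding set_integrable_def by simp
  have "\<bar>Th f u\<bar> = norm (\<integral>s. indicator {0..u} s * f s \<partial>lborel)"
    by (simp add: Th_def set_lebesgue_integral_def)
  also have "\<dots> \<le> (\<integral>s. norm (indicator {0..u} s * f s) \<partial>lborel)" by (rule integral_norm_bound)
  also have "\<dots> \<le> (\<integral>s. indicator {0..L} s * \<bar>f s\<bar> \<partial>lborel)"
    by (rule integral_mono) (use integrable_norm[OF i] iL assms in \<open>auto simp: indicator_def\<close>)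
  also have "\<dots> = N1 L f" by (simp add: N1_def set_lebesgue_integral_def)
  finally show ?thesis .
qed

lemma N1_nonneg: "0 \<le> N1 L f"
  unfolding N1_def set_lebesgue_integral_def by (rule integral_nonneg_AE) auto

type_synonym v3 = "real \<times> real \<times> real"

lemma cos_lip: "\<bar>cos a - cos b\<bar> \<le> \<bar>a - (b::real)\<bar>"
proof -
  have "\<bar>cos a - cos b\<bar> = 2 * \<bar>sin ((a+b)/2)\<bar> * \<bar>sin ((b-a)/2)\<bar>"
    by (simp add: cos_diff_cos abs_mult)
  also have "\<dots> \<le> 2 * 1 * \<bar>(b-a)/2\<bar>"
    by (intro mult_mono abs_sin_le_one abs_sin_x_le_abs_x) auto
  finally show ?thesis by simp
qed

lemma sin_lip: "\<bar>sin a - sin b\<bar> \<le> \<bar>a - (b::real)\<bar>"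
proof -
  have "\<bar>sin a - sin b\<bar> = 2 * \<bar>sin ((a-b)/2)\<bar> * \<bar>cos ((a+b)/2)\<bar>"
    by (simp add: sin_diff_sin abs_mult)
  also have "\<dots> \<le> 2 * \<bar>(a-b)/2\<bar> * 1"
    by (intro mult_mono abs_cos_le_one abs_sin_x_le_abs_x) auto
  finally show ?thesis by simp
qed

lemma si_abs_bound:
  fixes q :: "real \<Rightarrow> real"
  assumes "set_integrable lborel {0..L} q" "\<And>s. s \<in> {0..L} \<Longrightarrow> \<bar>q s\<bar> \<le> c" "0 \<le> L"
  shows "\<bar>LINT s:{0..L}|lborel. q s\<bar> \<le> c * L"
proof -
  have i: "integrable lborel (\<lambda>s. indicator {0..L} s * q s)"
    using assms(1) unfolding set_integrable_def by simp
  have "\<bar>LINT s:{0..L}|lborel. q s\<bar> = norm (\<integral>s. indicator {0..L} s * q s \<partial>lborel)"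
    by (simp add: set_lebesgue_integral_def)
  also have "\<dots> \<le> (\<integral>s. norm (indicator {0..L} s * q s) \<partial>lborel)" by (rule integral_norm_bound)
  also have "\<dots> \<le> (\<integral>s. c * indicator {0..L} s \<partial>lborel)"
    by (rule integral_mono) (use integrable_norm[OF i] ind_int[of 0 L] assms(2) in \<open>auto simp: indicator_def\<close>)
  also have "\<dots> = c * L" using assms(3) by simp
  finally show ?thesis .
qed

definition Gv :: "real \<Rightarrow> (real \<Rightarrow> real) \<Rightarrow> v3" where
  "Gv L f = (LINT s:{0..L}|lborel. f s, LINT s:{0..L}|lborel. cos (Th f s), LINT s:{0..L}|lborel. sin (Th f s))"

definition DGv :: "real \<Rightarrow> (real \<Rightarrow> real) \<Rightarrow> (real \<Rightarrow> real) \<Rightarrow> v3" where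
  "DGv L g \<phi> = (LINT s:{0..L}|lborel. \<phi> s, - (LINT s:{0..L}|lborel. sin (Th g s) * Th \<phi> s),
      LINT s:{0..L}|lborel. cos (Th g s) * Th \<phi> s)"

lemma Th_si: fixes F :: "real \<Rightarrow> real" assumes "set_integrable lborel {0..L} f" "continuous_on UNIV F"
  shows "set_integrable lborel {0..L} (\<lambda>s. F (Th f s))"
  by (rule cont_si, rule continuous_on_compose2[OF assms(2) Th_cont[OF assms(1)]]) auto

lemma Th_si2: fixes F :: "real \<Rightarrow> real" assumes "set_integrable lborel {0..L} f" "set_integrable lborel {0..L} h" "continuous_on UNIV F"
  shows "set_integrable lborel {0..L} (\<lambda>s. F (Th f s) * Th h s)"
  by (rule cont_si, intro continuous_intros continuous_on_compose2[OF assms(3) Th_cont[OF assms(1)]] Th_cont[OF assms(2)]) auto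

lemma remainder:
  assumes g: "set_integrable lborel {0..L} g" and p: "set_integrable lborel {0..L} \<phi>" and L: "0 \<le> L"
  shows "norm (Gv L (\<lambda>s. g s + \<phi> s) - Gv L g - DGv L g \<phi>) \<le> 2 * L * (N1 L \<phi>)^2"
proof -
  let ?N = "N1 L \<phi>"
  have thadd: "Th (\<lambda>s. g s + \<phi> s) s = Th g s + Th \<phi> s" if "s \<in> {0..L}" for s
    using Th_add[OF g p] that by auto
  have Nb: "(Th \<phi> s)^2 \<le> ?N^2" if "s \<in> {0..L}" for s
    using Th_bound[OF p, of s] that by (metis atLeastAtMost_iff abs_ge_zero power2_abs power_mono)
  have gp: "set_integrable lborel {0..L} (\<lambda>s. g s + \<phi> s)" using g p by (rule set_integral_add)
  have c1: "(LINT s:{0..L}|lborel. g s + \<phi> s) - (LINT s:{0..L}|lborel. g s) - (LINT s:{0..L}|lborel. \<phi> s) = 0"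
    using g p by simp
  have c2: "\<bar>(LINT s:{0..L}|lborel. cos (Th (\<lambda>s. g s + \<phi> s) s)) - (LINT s:{0..L}|lborel. cos (Th g s))
      - (- (LINT s:{0..L}|lborel. sin (Th g s) * Th \<phi> s))\<bar> \<le> ?N^2 * L"
  proof -
    have i1: "set_integrable lborel {0..L} (\<lambda>s. cos (Th (\<lambda>s. g s + \<phi> s) s))"
      by (rule Th_si[OF gp]) (intro continuous_intros)
    have i2: "set_integrable lborel {0..L} (\<lambda>s. cos (Th g s))" by (rule Th_si[OF g]) (intro continuous_intros)
    have i3: "set_integrable lborel {0..L} (\<lambda>s. sin (Th g s) * Th \<phi> s)" by (rule Th_si2[OF g p]) (intro continuous_intros)
    have "(LINT s:{0..L}|lborel. cos (Th (\<lambda>s. g s + \<phi> s) s)) - (LINT s:{0..L}|lborel. cos (Th g s))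
      - (- (LINT s:{0..L}|lborel. sin (Th g s) * Th \<phi> s))
      = (LINT s:{0..L}|lborel. cos (Th (\<lambda>s. g s + \<phi> s) s) - cos (Th g s) + sin (Th g s) * Th \<phi> s)"
      using i1 i2 i3 by simp
    also have "\<dots> = (LINT s:{0..L}|lborel. cos (Th g s + Th \<phi> s) - cos (Th g s) + sin (Th g s) * Th \<phi> s)"
      by (rule set_lebesgue_integral_cong) (use thadd in auto)
    finally have e: "(LINT s:{0..L}|lborel. cos (Th (\<lambda>s. g s + \<phi> s) s)) - (LINT s:{0..L}|lborel. cos (Th g s))
      - (- (LINT s:{0..L}|lborel. sin (Th g s) * Th \<phi> s))
      = (LINT s:{0..L}|lborel. cos (Th g s + Th \<phi> s) - cos (Th g s) + sin (Th g s) * Th \<phi> s)" .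
    have i4: "set_integrable lborel {0..L} (\<lambda>s. cos (Th g s + Th \<phi> s) - cos (Th g s) + sin (Th g s) * Th \<phi> s)"
      by (rule cont_si) (intro continuous_intros Th_cont[OF g] Th_cont[OF p])
    show ?thesis unfolding e
      by (rule si_abs_bound[OF i4 _ L]) (use cos_taylor Nb order_trans in blast)
  qed
  have c3: "\<bar>(LINT s:{0..L}|lborel. sin (Th (\<lambda>s. g s + \<phi> s) s)) - (LINT s:{0..L}|lborel. sin (Th g s))
      - (LINT s:{0..L}|lborel. cos (Th g s) * Th \<phi> s)\<bar> \<le> ?N^2 * L"
  proof -
    have i1: "set_integrable lborel {0..L} (\<lambda>s. sin (Th (\<lambda>s. g s + \<phi> s) s))"
      by (rule Th_si[OF gp]) (intro continuous_intros)
    have i2: "set_integrable lborel {0..L} (\<lambda>s. sin (Th g s))" by (rule Th_si[OF g]) (intro continuous_intros)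
    have i3: "set_integrable lborel {0..L} (\<lambda>s. cos (Th g s) * Th \<phi> s)" by (rule Th_si2[OF g p]) (intro continuous_intros)
    have "(LINT s:{0..L}|lborel. sin (Th (\<lambda>s. g s + \<phi> s) s)) - (LINT s:{0..L}|lborel. sin (Th g s))
      - (LINT s:{0..L}|lborel. cos (Th g s) * Th \<phi> s)
      = (LINT s:{0..L}|lborel. sin (Th (\<lambda>s. g s + \<phi> s) s) - sin (Th g s) - cos (Th g s) * Th \<phi> s)"
      using i1 i2 i3 by simp
    also have "\<dots> = (LINT s:{0..L}|lborel. sin (Th g s + Th \<phi> s) - sin (Th g s) - cos (Th g s) * Th \<phi> s)"
      by (rule set_lebesgue_integral_cong) (use thadd in auto)
    finally have e: "(LINT s:{0..L}|lborel. sin (Th (\<lambda>s. g s + \<phi> s) s)) - (LINT s:{0..L}|lborel. sin (Th g s))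
      - (LINT s:{0..L}|lborel. cos (Th g s) * Th \<phi> s)
      = (LINT s:{0..L}|lborel. sin (Th g s + Th \<phi> s) - sin (Th g s) - cos (Th g s) * Th \<phi> s)" .
    have i4: "set_integrable lborel {0..L} (\<lambda>s. sin (Th g s + Th \<phi> s) - sin (Th g s) - cos (Th g s) * Th \<phi> s)"
      by (rule cont_si) (intro continuous_intros Th_cont[OF g] Th_cont[OF p])
    show ?thesis unfolding e
      by (rule si_abs_bound[OF i4 _ L]) (use sin_taylor Nb order_trans in blast)
  qed
  have "norm (Gv L (\<lambda>s. g s + \<phi> s) - Gv L g - DGv L g \<phi>) \<le> 0 + ?N^2 * L + ?N^2 * L"
    unfolding Gv_def DGv_def
    by (simp only: diff_Pair, rule order_trans[OF norm_triple_le]) (use c1 c2 c3 in linarith)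
  then show ?thesis by (simp add: algebra_simps)
qed

lemma Gv_lip:
  assumes f1: "set_integrable lborel {0..L} f1" and f2: "set_integrable lborel {0..L} f2" and L: "0 \<le> L"
  shows "norm (Gv L f1 - Gv L f2) \<le> (1 + 2 * L) * N1 L (\<lambda>s. f1 s - f2 s)"
proof -
  let ?N = "N1 L (\<lambda>s. f1 s - f2 s)"
  have d: "set_integrable lborel {0..L} (\<lambda>s. f1 s - f2 s)" using f1 f2 by (rule set_integral_diff)
  have thd: "\<bar>Th f1 s - Th f2 s\<bar> \<le> ?N" if "s \<in> {0..L}" for s
  proof -
    have "Th (\<lambda>s. f1 s - f2 s) s = Th f1 s - Th f2 s"
      using Th_add[OF f1 set_integrable_mult_right[OF f2, of "-1"], of s] that Th_cmult[of "-1" f2 s] by simp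
    then show ?thesis using Th_bound[OF d, of s] that by auto
  qed
  have a1: "\<bar>(LINT s:{0..L}|lborel. f1 s) - (LINT s:{0..L}|lborel. f2 s)\<bar> \<le> ?N"
  proof -
    have "(LINT s:{0..L}|lborel. f1 s) - (LINT s:{0..L}|lborel. f2 s) = Th (\<lambda>s. f1 s - f2 s) L"
      using f1 f2 by (simp add: Th_def)
    then show ?thesis using Th_bound[OF d, of L] L by simp
  qed
  have a2: "\<bar>(LINT s:{0..L}|lborel. cos (Th f1 s)) - (LINT s:{0..L}|lborel. cos (Th f2 s))\<bar> \<le> ?N * L"
  proof -
    have "(LINT s:{0..L}|lborel. cos (Th f1 s)) - (LINT s:{0..L}|lborel. cos (Th f2 s))
        = (LINT s:{0..L}|lborel. cos (Th f1 s) - cos (Th f2 s))"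
      using Th_si[OF f1, of cos] Th_si[OF f2, of cos] by (simp add: continuous_on_cos continuous_on_id)
    also have "\<bar>\<dots>\<bar> \<le> ?N * L"
      by (rule si_abs_bound[OF _ _ L]) (auto intro!: cont_si continuous_intros Th_cont[OF f1] Th_cont[OF f2] intro: order_trans[OF cos_lip thd])
    finally show ?thesis .
  qed
  have a3: "\<bar>(LINT s:{0..L}|lborel. sin (Th f1 s)) - (LINT s:{0..L}|lborel. sin (Th f2 s))\<bar> \<le> ?N * L"
  proof -
    have "(LINT s:{0..L}|lborel. sin (Th f1 s)) - (LINT s:{0..L}|lborel. sin (Th f2 s))
        = (LINT s:{0..L}|lborel. sin (Th f1 s) - sin (Th f2 s))"
      using Th_si[OF f1, of sin] Th_si[OF f2, of sin] by (simp add: continuous_on_sin continuous_on_id)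
    also have "\<bar>\<dots>\<bar> \<le> ?N * L"
      by (rule si_abs_bound[OF _ _ L]) (auto intro!: cont_si continuous_intros Th_cont[OF f1] Th_cont[OF f2] intro: order_trans[OF sin_lip thd])
    finally show ?thesis .
  qed
  have "norm (Gv L f1 - Gv L f2) \<le> ?N + ?N * L + ?N * L"
    unfolding Gv_def
    by (simp only: diff_Pair, rule order_trans[OF norm_triple_le]) (use a1 a2 a3 in linarith)
  then show ?thesis by (simp add: algebra_simps)
qed

lemma DGv_add:
  assumes g: "set_integrable lborel {0..L} g" and p1: "set_integrable lborel {0..L} \<phi>1"
    and p2: "set_integrable lborel {0..L} \<phi>2"
  shows "DGv L g (\<lambda>s. \<phi>1 s + \<phi>2 s) = DGv L g \<phi>1 + DGv L g \<phi>2"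
proof -
  have e: "Th (\<lambda>s. \<phi>1 s + \<phi>2 s) s = Th \<phi>1 s + Th \<phi>2 s" if "s \<in> {0..L}" for s
    using Th_add[OF p1 p2] that by auto
  have a: "(LINT s:{0..L}|lborel. F (Th g s) * Th (\<lambda>s. \<phi>1 s + \<phi>2 s) s)
      = (LINT s:{0..L}|lborel. F (Th g s) * Th \<phi>1 s) + (LINT s:{0..L}|lborel. F (Th g s) * Th \<phi>2 s)"
    if F: "continuous_on UNIV F" for F :: "real \<Rightarrow> real"
  proof -
    have "(LINT s:{0..L}|lborel. F (Th g s) * Th (\<lambda>s. \<phi>1 s + \<phi>2 s) s)
      = (LINT s:{0..L}|lborel. F (Th g s) * Th \<phi>1 s + F (Th g s) * Th \<phi>2 s)"
      by (rule set_lebesgue_integral_cong) (auto simp: e algebra_simps)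
    also have "\<dots> = (LINT s:{0..L}|lborel. F (Th g s) * Th \<phi>1 s) + (LINT s:{0..L}|lborel. F (Th g s) * Th \<phi>2 s)"
      by (rule set_integral_add) (rule Th_si2[OF g _ F]; fact)+
    finally show ?thesis .
  qed
  show ?thesis unfolding DGv_def
    using a[of sin] a[of cos] p1 p2 by (simp add: continuous_on_sin continuous_on_cos continuous_on_id)
qed

lemma DGv_cmult: "DGv L g (\<lambda>s. c * \<phi> s) = c *\<^sub>R DGv L g \<phi>"
  unfolding DGv_def Th_cmult by (simp add: mult.left_commute)

definition Sfun :: "real \<Rightarrow> (real \<Rightarrow> real) \<Rightarrow> (real \<Rightarrow> real) \<Rightarrow> real \<Rightarrow> real" where
  "Sfun L F g t = (LINT u:{t..L}|lborel. F (Th g u))"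

lemma fubini_F:
  fixes F :: "real \<Rightarrow> real"
  assumes g: "set_integrable lborel {0..L} g" and pm: "\<phi> \<in> borel_measurable borel"
    and p: "set_integrable lborel {0..L} \<phi>" and L: "0 \<le> L"
    and F: "continuous_on UNIV F" and Fb: "\<And>x. \<bar>F x\<bar> \<le> 1"
  shows "(LINT u:{0..L}|lborel. F (Th g u) * Th \<phi> u) = (LINT t:{0..L}|lborel. \<phi> t * Sfun L F g t)"
proof -
  define H where "H u = indicator {0..L} u * F (Th g u)" for u
  have c: "continuous_on {0..L} (\<lambda>u. F (Th g u))"
    by (rule continuous_on_compose2[OF F Th_cont[OF g]]) auto
  have Hm: "H \<in> borel_measurable borel"
    unfolding H_def using borel_measurable_continuous_on_indicator[OF _ c] by simp
  have Hb: "\<bar>H u\<bar> \<le> 1" for u using Fb[of "Th g u"] by (auto simp: H_def indicator_def)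
  have "(LINT u:{0..L}|lborel. H u * Th \<phi> u) = (LINT t:{0..L}|lborel. \<phi> t * (LINT u:{t..L}|lborel. H u))"
    by (rule fubini_Th[OF pm p Hm Hb L])
  moreover have "(LINT u:{0..L}|lborel. H u * Th \<phi> u) = (LINT u:{0..L}|lborel. F (Th g u) * Th \<phi> u)"
    by (rule set_lebesgue_integral_cong) (auto simp: H_def)
  moreover have "(LINT t:{0..L}|lborel. \<phi> t * (LINT u:{t..L}|lborel. H u)) = (LINT t:{0..L}|lborel. \<phi> t * Sfun L F g t)"
  proof (rule set_lebesgue_integral_cong, simp, intro allI impI)
    fix t assume t: "t \<in> {0..L}"
    have "(LINT u:{t..L}|lborel. H u) = Sfun L F g t"
      unfolding Sfun_def by (rule set_lebesgue_integral_cong) (use t in \<open>auto simp: H_def\<close>)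
    then show "\<phi> t * (LINT u:{t..L}|lborel. H u) = \<phi> t * Sfun L F g t" by simp
  qed
  ultimately show ?thesis by simp
qed

lemma DGv_formula:
  assumes g: "set_integrable lborel {0..L} g" and pm: "\<phi> \<in> borel_measurable borel"
    and p: "set_integrable lborel {0..L} \<phi>" and L: "0 \<le> L"
  shows "DGv L g \<phi> = (LINT t:{0..L}|lborel. \<phi> t, - (LINT t:{0..L}|lborel. \<phi> t * Sfun L sin g t),
                     LINT t:{0..L}|lborel. \<phi> t * Sfun L cos g t)"
  unfolding DGv_def
  using fubini_F[OF g pm p L, of sin] fubini_F[OF g pm p L, of cos]
  by (simp add: continuous_on_sin continuous_on_cos continuous_on_id abs_sin_le_one abs_cos_le_one)

lemma Sfun_cont: assumes g: "set_integrable lborel {0..L} g" and F: "continuous_on UNIV F"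
  shows "continuous_on {0..L} (Sfun L F g)"
proof -
  have c: "continuous_on {0..L} (\<lambda>u. F (Th g u))"
    by (rule continuous_on_compose2[OF F Th_cont[OF g]]) auto
  have si: "set_integrable lborel {0..L} (\<lambda>u. F (Th g u))" by (rule cont_si[OF c])
  have "continuous_on {0..L} (\<lambda>t. Th (\<lambda>u. F (Th g u)) L - Th (\<lambda>u. F (Th g u)) t)"
    by (intro continuous_intros Th_cont[OF si])
  then show ?thesis
    by (rule continuous_on_eq) (use Th_diff[OF si] in \<open>auto simp: Sfun_def\<close>)
qed

lemma Sfun_eq: assumes g: "set_integrable lborel {0..L} g" and F: "continuous_on UNIV F" and t: "t \<in> {0..L}"
  shows "Sfun L F g t = Th (\<lambda>u. F (Th g u)) L - Th (\<lambda>u. F (Th g u)) t"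
proof -
  have c: "continuous_on {0..L} (\<lambda>u. F (Th g u))"
    by (rule continuous_on_compose2[OF F Th_cont[OF g]]) auto
  show ?thesis using Th_diff[OF cont_si[OF c], of t L] t by (auto simp: Sfun_def)
qed

lemma Sfun_deriv: assumes g: "set_integrable lborel {0..L} g" and F: "continuous_on UNIV F" and t: "t \<in> {0..L}"
  shows "(Sfun L F g has_real_derivative - F (Th g t)) (at t within {0..L})"
proof -
  have c: "continuous_on {0..L} (\<lambda>u. F (Th g u))"
    by (rule continuous_on_compose2[OF F Th_cont[OF g]]) auto
  have "((\<lambda>t. Th (\<lambda>u. F (Th g u)) L - Th (\<lambda>u. F (Th g u)) t) has_real_derivative 0 - F (Th g t)) (at t within {0..L})"
    by (intro derivative_intros Th_deriv[OF c t])
  then have "((\<lambda>t. Th (\<lambda>u. F (Th g u)) L - Th (\<lambda>u. F (Th g u)) t) has_real_derivative - F (Th g t)) (at t within {0..L})"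
    by simp
  then show ?thesis
    by (rule has_field_derivative_transform_within[where d=1]) (use Sfun_eq[OF g F] t in auto)
qed

lemma Sfun_lip: assumes g: "set_integrable lborel {0..L} g" and F: "continuous_on UNIV F"
  and Fb: "\<And>x. \<bar>F x\<bar> \<le> 1" and s: "s \<in> {0..L}" and t: "t \<in> {0..L}"
  shows "\<bar>Sfun L F g s - Sfun L F g t\<bar> \<le> \<bar>s - t\<bar>"
proof -
  have c: "continuous_on {0..L} (\<lambda>u. F (Th g u))"
    by (rule continuous_on_compose2[OF F Th_cont[OF g]]) auto
  have si: "set_integrable lborel {0..L} (\<lambda>u. F (Th g u))" by (rule cont_si[OF c])
  have w: "\<bar>Sfun L F g s - Sfun L F g t\<bar> \<le> t - s" if "s \<le> t" "s \<in> {0..L}" "t \<in> {0..L}" for s t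
  proof -
    have "Sfun L F g s - Sfun L F g t = Th (\<lambda>u. F (Th g u)) t - Th (\<lambda>u. F (Th g u)) s"
      using Sfun_eq[OF g F that(2)] Sfun_eq[OF g F that(3)] by simp
    also have "\<dots> = (LINT u:{s..t}|lborel. F (Th g u))" using Th_diff[OF si, of s t] that by auto
    finally have e: "Sfun L F g s - Sfun L F g t = (LINT u:{s..t}|lborel. F (Th g u))" .
    have "\<bar>LINT u:{s..t}|lborel. F (Th g u)\<bar> \<le> 1 * (t - s)"
    proof -
      have si2: "set_integrable lborel {s..t} (\<lambda>u. F (Th g u))" using si_sub[OF si] that by auto
      have i: "integrable lborel (\<lambda>x. indicator {s..t} x * F (Th g x))"
        using si2 unfolding set_integrable_def by simp
      have "\<bar>LINT u:{s..t}|lborel. F (Th g u)\<bar> = norm (\<integral>x. indicator {s..t} x * F (Th g x) \<partial>lborel)"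
        by (simp add: set_lebesgue_integral_def)
      also have "\<dots> \<le> (\<integral>x. norm (indicator {s..t} x * F (Th g x)) \<partial>lborel)" by (rule integral_norm_bound)
      also have "\<dots> \<le> (\<integral>x. 1 * indicator {s..t} x \<partial>lborel)"
        by (rule integral_mono) (use integrable_norm[OF i] ind_int[of s t] Fb in \<open>auto simp: indicator_def abs_mult\<close>)
      also have "\<dots> = 1 * (t - s)" using that by simp
      finally show ?thesis .
    qed
    then show ?thesis using e by simp
  qed
  show ?thesis
    using w[of s t] w[of t s] s t by (cases "s \<le> t") (auto simp: abs_minus_commute)
qed

locale mini =
  fixes \<alpha> L :: real and g :: "real \<Rightarrow> real"
  assumes Lpos: "0 < L" and apos: "0 < \<alpha>" and ale: "\<alpha> \<le> pi/2"
    and gL2: "L2 L g"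
    and gnn: "AE s in lborel. s \<in> {0..L} \<longrightarrow> 0 \<le> g s"
    and gend: "Th g L = 2 * \<alpha>"
    and gmin: "\<And>f. L2 L f \<Longrightarrow> (AE s in lborel. s \<in> {0..L} \<longrightarrow> 0 \<le> f s) \<Longrightarrow> Gv L f = Gv L g \<Longrightarrow>
        (LINT s:{0..L}|lborel. (g s)^2) \<le> (LINT s:{0..L}|lborel. (f s)^2)"
begin

lemma gL1: "set_integrable lborel {0..L} g" using L2_L1[OF gL2] .
lemma gm: "g \<in> borel_measurable borel" using gL2 by (simp add: L2_def)

lemma Th0: "Th f 0 = 0"
  unfolding Th_def set_lebesgue_integral_def
proof (rule integral_eq_zero_AE)
  show "AE x in lborel. indicat_real {0..0} x *\<^sub>R f x = 0"
    using AE_lborel_singleton[of 0] by eventually_elim (auto simp: indicator_def)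
qed

lemma th_cont: "continuous_on {0..L} (Th g)" by (rule Th_cont[OF gL1])

lemma int_zero_AE:
  assumes "AE t in lborel. t \<in> {a..b} \<longrightarrow> f t = 0"
  shows "(LINT t:{a..b}|lborel. f t) = (0::real)"
  unfolding set_lebesgue_integral_def
  by (rule integral_eq_zero_AE) (use assms in \<open>auto simp: indicator_def elim!: AE_mp\<close>)

lemma th_mono: assumes "0 \<le> a" "a \<le> b" "b \<le> L" shows "Th g a \<le> Th g b"
proof -
  have "Th g b - Th g a = (LINT u:{a..b}|lborel. g u)" using Th_diff[OF gL1 assms] .
  also have "\<dots> \<ge> 0"
    unfolding set_lebesgue_integral_def
    by (rule integral_nonneg_AE) (use gnn assms in \<open>auto simp: indicator_def elim: AE_mp\<close>)
  finally show ?thesis by simp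
qed

lemma sign_const:
  fixes P :: "real \<Rightarrow> real"
  assumes c: "continuous_on {a..b} P" and nz: "\<And>t. a < t \<Longrightarrow> t < b \<Longrightarrow> P t \<noteq> 0"
  shows "(\<forall>t. a < t \<and> t < b \<longrightarrow> 0 < P t) \<or> (\<forall>t. a < t \<and> t < b \<longrightarrow> P t < 0)"
proof (rule ccontr)
  assume "\<not> ?thesis"
  then obtain t1 t2 where t1: "a < t1" "t1 < b" "P t1 \<le> 0" and t2: "a < t2" "t2 < b" "0 \<le> P t2"
    by (auto simp: not_less)
  have t1': "P t1 < 0" using nz t1 by force
  have t2': "0 < P t2" using nz t2 by force
  show False
  proof (cases "t1 \<le> t2")
    case True
    obtain x where "t1 \<le> x" "x \<le> t2" "P x = 0"
      using IVT'[of P t1 0 t2] t1' t2' True continuous_on_subset[OF c, of "{t1..t2}"] t1 t2 by auto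
    then show False using nz[of x] t1 t2 by auto
  next
    case False
    obtain x where "t2 \<le> x" "x \<le> t1" "P x = 0"
      using IVT2'[of P t1 0 t2] t1' t2' False continuous_on_subset[OF c, of "{t2..t1}"] t1 t2 by auto
    then show False using nz[of x] t1 t2 by auto
  qed
qed

lemma const_on:
  fixes P :: "real \<Rightarrow> real"
  assumes ab: "0 \<le> a" "a \<le> b" "b \<le> L" and c: "continuous_on {0..L} P"
    and Pm: "(\<lambda>t. indicator {0..L} t * P t) \<in> borel_measurable borel"
    and zero: "(LINT t:{a..b}|lborel. g t * P t) = 0"
    and nz: "\<And>t. a < t \<Longrightarrow> t < b \<Longrightarrow> P t \<noteq> 0"
  shows "Th g a = Th g b"
proof -
  have cab: "continuous_on {a..b} P" using continuous_on_subset[OF c] ab by auto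
  obtain \<sigma> :: real where \<sigma>: "\<sigma> = 1 \<or> \<sigma> = -1" and pos: "\<And>t. a < t \<Longrightarrow> t < b \<Longrightarrow> 0 < \<sigma> * P t"
    using sign_const[OF cab nz] by (metis mult_minus_left mult_1 neg_0_less_iff_less)
  have Pab: "set_integrable lborel {a..b} (\<lambda>t. g t * P t)"
  proof -
    have "continuous_on {0..L} (\<lambda>t. indicator {0..L} t * P t)"
      by (rule continuous_on_eq[OF c]) auto
    have "set_integrable lborel {0..L} (\<lambda>t. g t * P t)"
      using L2_prod[OF gL2 L2_cont[OF c]] by (rule set_integrable_cong[THEN iffD1, rotated -1]) (auto simp: indicator_def)
    then show ?thesis using si_sub ab by blast
  qed
  have i: "integrable lborel (\<lambda>t. indicator {a..b} t * (\<sigma> * (g t * P t)))"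
    using Pab unfolding set_integrable_def by (simp add: mult.left_commute)
  have AEne: "AE t in lborel. t \<noteq> a \<and> t \<noteq> b" using AE_lborel_singleton[of a] AE_lborel_singleton[of b] by auto
  have nn: "AE t in lborel. 0 \<le> indicator {a..b} t * (\<sigma> * (g t * P t))"
    using gnn AEne
  proof eventually_elim
    case (elim t)
    show ?case
    proof (cases "t \<in> {a..b}")
      case True
      then have "a < t" "t < b" using elim by auto
      then have "0 \<le> g t" "0 < \<sigma> * P t" using elim(1) ab pos by auto
      then have "0 \<le> g t * (\<sigma> * P t)" by simp
      then show ?thesis using True by (simp add: algebra_simps)
    qed simp
  qed
  have "(\<integral>t. indicator {a..b} t * (\<sigma> * (g t * P t)) \<partial>lborel) = \<sigma> * (LINT t:{a..b}|lborel. g t * P t)"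
    by (simp add: set_lebesgue_integral_def mult.left_commute)
  then have "(\<integral>t. indicator {a..b} t * (\<sigma> * (g t * P t)) \<partial>lborel) = 0" using zero by simp
  then have "AE t in lborel. indicator {a..b} t * (\<sigma> * (g t * P t)) = 0"
    using integral_nonneg_eq_0_iff_AE[OF i nn] by simp
  then have "AE t in lborel. t \<in> {a..b} \<longrightarrow> g t = 0"
    using AEne
  proof eventually_elim
    case (elim t)
    show ?case
    proof
      assume t: "t \<in> {a..b}"
      then have "a < t" "t < b" using elim by auto
      then have "\<sigma> * P t \<noteq> 0" using pos by force
      then show "g t = 0" using elim t by simp
    qed
  qed
  then have "(LINT t:{a..b}|lborel. g t) = 0" by (rule int_zero_AE)
  then show ?thesis using Th_diff[OF gL1 ab] by simp
qed

end

context mini begin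

lemma deriv_zero:
  fixes P :: "real \<Rightarrow> real"
  assumes t0: "0 < t0" "t0 < L" and c: "continuous_on {0..L} P"
    and Pm: "(\<lambda>t. indicator {0..L} t * P t) \<in> borel_measurable borel"
    and zero: "\<And>a b. 0 \<le> a \<Longrightarrow> a \<le> b \<Longrightarrow> b \<le> L \<Longrightarrow> (LINT t:{a..b}|lborel. g t * P t) = 0"
    and dP: "(P has_real_derivative d) (at t0)" and d: "d \<noteq> 0"
  shows "(Th g has_real_derivative 0) (at t0)"
proof -
  have "\<exists>e>0. \<forall>t. 0 < \<bar>t - t0\<bar> \<and> \<bar>t - t0\<bar> < e \<longrightarrow> P t \<noteq> 0"
  proof (cases "P t0 = 0")
    case False
    have "continuous (at t0) P" using dP by (rule DERIV_isCont)
    from continuous_at_avoid[OF this False] obtain e where "e > 0" "\<forall>y. dist t0 y < e \<longrightarrow> P y \<noteq> 0" by auto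
    then show ?thesis by (intro exI[of _ e]) (auto simp: dist_real_def abs_minus_commute)
  next
    case True
    show ?thesis
    proof (cases "d > 0")
      case True
      obtain d1 where d1: "d1 > 0" "\<forall>h>0. h < d1 \<longrightarrow> P t0 < P (t0 + h)" using DERIV_pos_inc_right[OF dP True] by auto
      obtain d2 where d2: "d2 > 0" "\<forall>h>0. h < d2 \<longrightarrow> P (t0 - h) < P t0" using DERIV_pos_inc_left[OF dP True] by auto
      show ?thesis
      proof (intro exI[of _ "min d1 d2"] conjI allI impI)
        fix t assume t: "0 < \<bar>t - t0\<bar> \<and> \<bar>t - t0\<bar> < min d1 d2"
        show "P t \<noteq> 0"
        proof (cases "t > t0")
          case True then show ?thesis using d1(2)[rule_format, of "t - t0"] t \<open>P t0 = 0\<close> by auto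
        next
          case False then show ?thesis using d2(2)[rule_format, of "t0 - t"] t \<open>P t0 = 0\<close> by auto
        qed
      qed (use d1 d2 in auto)
    next
      case False
      then have dn: "d < 0" using d by auto
      obtain d1 where d1: "d1 > 0" "\<forall>h>0. h < d1 \<longrightarrow> P (t0 + h) < P t0" using DERIV_neg_dec_right[OF dP dn] by auto
      obtain d2 where d2: "d2 > 0" "\<forall>h>0. h < d2 \<longrightarrow> P t0 < P (t0 - h)" using DERIV_neg_dec_left[OF dP dn] by auto
      show ?thesis
      proof (intro exI[of _ "min d1 d2"] conjI allI impI)
        fix t assume t: "0 < \<bar>t - t0\<bar> \<and> \<bar>t - t0\<bar> < min d1 d2"
        show "P t \<noteq> 0"
        proof (cases "t > t0")
          case True then show ?thesis using d1(2)[rule_format, of "t - t0"] t \<open>P t0 = 0\<close> by auto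
        next
          case False then show ?thesis using d2(2)[rule_format, of "t0 - t"] t \<open>P t0 = 0\<close> by auto
        qed
      qed (use d1 d2 in auto)
    qed
  qed
  then obtain e where e: "e > 0" "\<And>t. 0 < \<bar>t - t0\<bar> \<Longrightarrow> \<bar>t - t0\<bar> < e \<Longrightarrow> P t \<noteq> 0" by auto
  define \<epsilon> where "\<epsilon> = min (e/2) (min t0 (L - t0))"
  have \<epsilon>: "\<epsilon> > 0" "\<epsilon> < e" "\<epsilon> \<le> t0" "t0 + \<epsilon> \<le> L" using e t0 by (auto simp: \<epsilon>_def)
  have l: "Th g (t0 - \<epsilon>) = Th g t0"
  proof (rule const_on[OF _ _ _ c Pm zero])
    fix t assume "t0 - \<epsilon> < t" "t < t0"
    then have "0 < \<bar>t - t0\<bar>" "\<bar>t - t0\<bar> < e" using \<epsilon> by auto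
    then show "P t \<noteq> 0" by (rule e(2))
  qed (use \<epsilon> t0 in auto)
  have r: "Th g t0 = Th g (t0 + \<epsilon>)"
  proof (rule const_on[OF _ _ _ c Pm zero])
    fix t assume "t0 < t" "t < t0 + \<epsilon>"
    then have "0 < \<bar>t - t0\<bar>" "\<bar>t - t0\<bar> < e" using \<epsilon> by auto
    then show "P t \<noteq> 0" by (rule e(2))
  qed (use \<epsilon> t0 in auto)
  have const: "Th g t = Th g t0" if "t \<in> {t0 - \<epsilon><..<t0 + \<epsilon>}" for t
  proof -
    have "Th g (t0 - \<epsilon>) \<le> Th g t" "Th g t \<le> Th g (t0 + \<epsilon>)"
      using th_mono[of "t0 - \<epsilon>" t] th_mono[of t "t0 + \<epsilon>"] that \<epsilon> by auto
    then show ?thesis using l r by auto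
  qed
  show ?thesis
  proof (rule has_field_derivative_transform_within_open[where f="\<lambda>_. Th g t0" and S="{t0 - \<epsilon><..<t0 + \<epsilon>}"])
    show "((\<lambda>_. Th g t0) has_real_derivative 0) (at t0)" by (rule DERIV_const)
    show "open {t0 - \<epsilon><..<t0 + \<epsilon>}" by simp
    show "t0 \<in> {t0 - \<epsilon><..<t0 + \<epsilon>}" using \<epsilon> by simp
    show "\<And>x. x \<in> {t0 - \<epsilon><..<t0 + \<epsilon>} \<Longrightarrow> Th g t0 = Th g x" by (rule const[symmetric])
  qed
qed

definition PP :: "real \<Rightarrow> real \<Rightarrow> real \<Rightarrow> real \<Rightarrow> real" where
  "PP c1 c2 c3 t = c1 - c2 * Sfun L sin g t + c3 * Sfun L cos g t"

lemma PP_cont: "continuous_on {0..L} (PP c1 c2 c3)"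
proof -
  have s: "continuous_on (UNIV::real set) sin" "continuous_on (UNIV::real set) cos"
    using continuous_on_sin[OF continuous_on_id, of UNIV] continuous_on_cos[OF continuous_on_id, of UNIV] by simp_all
  show ?thesis unfolding PP_def by (intro continuous_intros Sfun_cont[OF gL1] s)
qed

lemma PP_meas: "(\<lambda>t. indicator {0..L} t * PP c1 c2 c3 t) \<in> borel_measurable borel"
  using borel_measurable_continuous_on_indicator[OF _ PP_cont] by simp

lemma PP_deriv: assumes "t \<in> {0..L}"
  shows "(PP c1 c2 c3 has_real_derivative (c2 * sin (Th g t) - c3 * cos (Th g t))) (at t within {0..L})"
proof -
  have s: "continuous_on (UNIV::real set) sin" "continuous_on (UNIV::real set) cos"
    using continuous_on_sin[OF continuous_on_id, of UNIV] continuous_on_cos[OF continuous_on_id, of UNIV] by simp_all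
  have dS: "(Sfun L sin g has_real_derivative - sin (Th g t)) (at t within {0..L})"
    by (rule Sfun_deriv[OF gL1 s(1) assms])
  have dC: "(Sfun L cos g has_real_derivative - cos (Th g t)) (at t within {0..L})"
    by (rule Sfun_deriv[OF gL1 s(2) assms])
  have "((\<lambda>z. c1 - c2 * Sfun L sin g z + c3 * Sfun L cos g z) has_real_derivative (0 - c2 * (- sin (Th g t)) + c3 * (- cos (Th g t)))) (at t within {0..L})"
    by (intro derivative_intros DERIV_cmult[OF dS] DERIV_cmult[OF dC])
  then have "(PP c1 c2 c3 has_real_derivative (0 - c2 * (- sin (Th g t)) + c3 * (- cos (Th g t)))) (at t within {0..L})"
    unfolding PP_def[abs_def] .
  then show ?thesis by simp
qed

lemma nondeg:
  assumes c: "(c1, c2, c3) \<noteq> (0::v3)"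
    and zero: "\<And>a b. 0 \<le> a \<Longrightarrow> a \<le> b \<Longrightarrow> b \<le> L \<Longrightarrow> (LINT t:{a..b}|lborel. g t * PP c1 c2 c3 t) = 0"
  shows False
proof (cases "c2 = 0 \<and> c3 = 0")
  case True
  then have c1: "c1 \<noteq> 0" using c by (auto simp: zero_prod_def)
  have "Th g 0 = Th g L"
    by (rule const_on[OF _ _ _ PP_cont PP_meas zero]) (use Lpos True c1 in \<open>auto simp: PP_def\<close>)
  then show False using gend apos Th0 by simp
next
  case False
  define h where "h v = c2 * sin v - c3 * cos v" for v
  have hc: "continuous_on UNIV h" unfolding h_def by (intro continuous_intros)
  have "\<exists>v. 0 < v \<and> v < 2 * \<alpha> \<and> h v \<noteq> 0"
  proof (rule ccontr)
    assume "\<not> ?thesis"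
    then have hz: "h v = 0" if "0 < v" "v < 2 * \<alpha>" for v using that by auto
    have d1: "(h has_real_derivative (c2 * cos \<alpha> + c3 * sin \<alpha>)) (at \<alpha>)"
      unfolding h_def[abs_def] by (auto intro!: derivative_eq_intros)
    have "(h has_real_derivative 0) (at \<alpha>)"
      proof (rule has_field_derivative_transform_within_open[where f="\<lambda>_. 0" and S="{0<..<2*\<alpha>}"])
      show "((\<lambda>_. 0) has_real_derivative 0) (at \<alpha>)" by (rule DERIV_const)
    qed (use apos hz in auto)
    then have e1: "c2 * cos \<alpha> + c3 * sin \<alpha> = 0" using DERIV_unique[OF d1] by simp
    have e2: "c2 * sin \<alpha> - c3 * cos \<alpha> = 0" using hz[of \<alpha>] apos by (simp add: h_def)
    have one: "sin \<alpha> * sin \<alpha> + cos \<alpha> * cos \<alpha> = 1"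
      using sin_cos_squared_add[of \<alpha>] by (simp add: power2_eq_square)
    have "c2 = 0" using e1 e2 one by algebra
    moreover have "c3 = 0" using e1 e2 one by algebra
    ultimately show False using False by simp
  qed
  then obtain vs where vs: "0 < vs" "vs < 2 * \<alpha>" "h vs \<noteq> 0" by auto
  obtain \<delta> where \<delta>: "\<delta> > 0" "\<And>v. dist vs v < \<delta> \<Longrightarrow> h v \<noteq> 0"
    using continuous_at_avoid[of vs h 0] hc vs(3) by (auto simp: continuous_on_eq_continuous_at)
  define v1 where "v1 = vs - min (\<delta>/2) (vs/2)"
  have v1: "0 < v1" "v1 < vs" "vs - v1 < \<delta>" using \<delta> vs by (auto simp: v1_def)
  obtain t0 where t0: "0 \<le> t0" "t0 \<le> L" "Th g t0 = vs"
    using IVT'[of "Th g" 0 vs L] Th0 gend vs th_cont Lpos by auto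
  obtain a where a: "0 \<le> a" "a \<le> t0" "Th g a = v1"
    using IVT'[of "Th g" 0 v1 t0] Th0 t0 v1 continuous_on_subset[OF th_cont, of "{0..t0}"] by auto
  have at0: "a < t0" using a t0 v1 by (cases "a = t0") auto
  have "Th g t0 = Th g a"
  proof (rule DERIV_isconst_end[OF at0])
    show "continuous_on {a..t0} (Th g)" using continuous_on_subset[OF th_cont] a t0 by auto
    fix s assume s: "a < s" "s < t0"
    have "v1 \<le> Th g s" "Th g s \<le> vs" using th_mono[of a s] th_mono[of s t0] a t0 s by auto
    then have hs: "h (Th g s) \<noteq> 0" using \<delta>(2)[of "Th g s"] v1 by (auto simp: dist_real_def)
    have sL: "0 < s" "s < L" using s a t0 by auto
    have "(PP c1 c2 c3 has_real_derivative h (Th g s)) (at s within {0..L})"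
      using PP_deriv[of s c1 c2 c3] sL by (simp add: h_def)
    moreover have "at s within {0..L} = at s"
      by (rule at_within_interior) (use sL in auto)
    ultimately have dP: "(PP c1 c2 c3 has_real_derivative h (Th g s)) (at s)" by simp
    show "(Th g has_real_derivative 0) (at s)"
      by (rule deriv_zero[OF sL PP_cont PP_meas zero dP hs])
  qed
  then show False using a t0 v1 by simp
qed

end

context mini begin

definition psi :: "real \<Rightarrow> real \<Rightarrow> real \<Rightarrow> real" where
  "psi a b t = g t * indicator {a..b} t"

lemma psi_L2: "L2 L (psi a b)"
  unfolding psi_def[abs_def] by (rule L2_ind[OF gL2])

lemma s_cont: "continuous_on (UNIV::real set) sin" "continuous_on (UNIV::real set) cos"
  using continuous_on_sin[OF continuous_on_id, of UNIV] continuous_on_cos[OF continuous_on_id, of UNIV] by simp_all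

lemma L2_Sfun: "L2 L (\<lambda>t. indicator {0..L} t * Sfun L sin g t)" "L2 L (\<lambda>t. indicator {0..L} t * Sfun L cos g t)"
  by (rule L2_cont[OF Sfun_cont[OF gL1 s_cont(1)]], rule L2_cont[OF Sfun_cont[OF gL1 s_cont(2)]])

lemma si_timesS:
  assumes "L2 L \<phi>" and F: "F = sin \<or> F = cos"
  shows "set_integrable lborel {0..L} (\<lambda>t. \<phi> t * Sfun L F g t)"
proof -
  have "L2 L (\<lambda>t. indicator {0..L} t * Sfun L F g t)" using L2_Sfun F by auto
  from L2_prod[OF assms(1) this] show ?thesis
    by (rule set_integrable_cong[THEN iffD1, rotated -1]) (auto simp: indicator_def)
qed

lemma DG_inner:
  assumes p: "L2 L \<phi>"
  shows "(c1, c2, c3) \<bullet> DGv L g \<phi> = (LINT t:{0..L}|lborel. \<phi> t * PP c1 c2 c3 t)"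
proof -
  have p1: "set_integrable lborel {0..L} \<phi>" using L2_L1[OF p] .
  have pm: "\<phi> \<in> borel_measurable borel" using p by (simp add: L2_def)
  have iS: "set_integrable lborel {0..L} (\<lambda>t. \<phi> t * Sfun L sin g t)" by (rule si_timesS[OF p]) simp
  have iC: "set_integrable lborel {0..L} (\<lambda>t. \<phi> t * Sfun L cos g t)" by (rule si_timesS[OF p]) simp
  have "(c1, c2, c3) \<bullet> DGv L g \<phi> = c1 * (LINT t:{0..L}|lborel. \<phi> t) - c2 * (LINT t:{0..L}|lborel. \<phi> t * Sfun L sin g t)
      + c3 * (LINT t:{0..L}|lborel. \<phi> t * Sfun L cos g t)"
    unfolding DGv_formula[OF gL1 pm p1 less_imp_le[OF Lpos]] by (simp add: inner_prod_def)
  also have "\<dots> = (LINT t:{0..L}|lborel. c1 * \<phi> t - c2 * (\<phi> t * Sfun L sin g t) + c3 * (\<phi> t * Sfun L cos g t))"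
    using p1 iS iC by (simp add: set_integrable_mult_right)
  also have "\<dots> = (LINT t:{0..L}|lborel. \<phi> t * PP c1 c2 c3 t)"
    by (rule set_lebesgue_integral_cong) (auto simp: PP_def algebra_simps)
  finally show ?thesis .
qed

lemma DG_psi_inner:
  assumes ab: "0 \<le> a" "a \<le> b" "b \<le> L"
  shows "(c1, c2, c3) \<bullet> DGv L g (psi a b) = (LINT t:{a..b}|lborel. g t * PP c1 c2 c3 t)"
proof -
  have "(c1, c2, c3) \<bullet> DGv L g (psi a b) = (LINT t:{0..L}|lborel. psi a b t * PP c1 c2 c3 t)"
    by (rule DG_inner[OF psi_L2])
  also have "\<dots> = (LINT t:{a..b}|lborel. g t * PP c1 c2 c3 t)"
    unfolding set_lebesgue_integral_def
    by (rule Bochner_Integration.integral_cong) (use ab in \<open>auto simp: psi_def indicator_def\<close>)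
  finally show ?thesis .
qed

lemma regular:
  obtains a1 b1 a2 b2 a3 b3 where "0 \<le> a1" "a1 \<le> b1" "b1 \<le> L" "0 \<le> a2" "a2 \<le> b2" "b2 \<le> L"
    "0 \<le> a3" "a3 \<le> b3" "b3 \<le> L"
    "\<And>r1 r2 r3. r1 *\<^sub>R DGv L g (psi a1 b1) + r2 *\<^sub>R DGv L g (psi a2 b2) + r3 *\<^sub>R DGv L g (psi a3 b3) = 0
        \<Longrightarrow> r1 = 0 \<and> r2 = 0 \<and> r3 = 0"
proof -
  define V where "V = {DGv L g (psi a b) | a b. 0 \<le> a \<and> a \<le> b \<and> b \<le> L}"
  have "span V = UNIV"
  proof (rule ccontr)
    assume "span V \<noteq> UNIV"
    from span_not_UNIV_orthogonal[OF this] obtain c :: v3 where c: "c \<noteq> 0" "\<forall>x\<in>span V. c \<bullet> x = 0" by auto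
    obtain c1 c2 c3 where cc: "c = (c1, c2, c3)" by (cases c) auto
    show False
    proof (rule nondeg)
      show "(c1, c2, c3) \<noteq> (0::v3)" using c cc by simp
      fix a b assume ab: "0 \<le> a" "a \<le> b" "b \<le> L"
      have "DGv L g (psi a b) \<in> span V" using ab by (auto simp: V_def intro!: span_base)
      then have "c \<bullet> DGv L g (psi a b) = 0" using c by auto
      then show "(LINT t:{a..b}|lborel. g t * PP c1 c2 c3 t) = 0" using DG_psi_inner[OF ab, of c1 c2 c3] cc by simp
    qed
  qed
  obtain B where B: "B \<subseteq> V" "independent B" "V \<subseteq> span B" "card B = dim V"
    by (rule basis_exists)
  have "dim V = 3"
  proof -
    have "dim V = dim (span V)" by simp
    also have "\<dots> = DIM(v3)" using \<open>span V = UNIV\<close> by simp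
    also have "\<dots> = 3" by (simp add: Basis_prod_def card_Un_disjoint disjoint_iff)
    finally show ?thesis .
  qed
  then obtain x y z where xyz: "B = {x, y, z}" "x \<noteq> y" "y \<noteq> z" "x \<noteq> z"
    using B(4) card_3_iff[of B] by auto
  have "x \<in> V" "y \<in> V" "z \<in> V" using B(1) xyz by auto
  then obtain a1 b1 a2 b2 a3 b3 where
    ab1: "0 \<le> a1" "a1 \<le> b1" "b1 \<le> L" "x = DGv L g (psi a1 b1)" and
    ab2: "0 \<le> a2" "a2 \<le> b2" "b2 \<le> L" "y = DGv L g (psi a2 b2)" and
    ab3: "0 \<le> a3" "a3 \<le> b3" "b3 \<le> L" "z = DGv L g (psi a3 b3)"
    unfolding V_def by blast
  show ?thesis
  proof (rule that[OF ab1(1-3) ab2(1-3) ab3(1-3)])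
    fix r1 r2 r3 assume r: "r1 *\<^sub>R DGv L g (psi a1 b1) + r2 *\<^sub>R DGv L g (psi a2 b2) + r3 *\<^sub>R DGv L g (psi a3 b3) = 0"
    define u where "u v = (if v = x then r1 else if v = y then r2 else r3)" for v
    have "(\<Sum>v\<in>B. u v *\<^sub>R v) = r1 *\<^sub>R x + r2 *\<^sub>R y + r3 *\<^sub>R z"
      using xyz by (simp add: u_def)
    then have s0: "(\<Sum>v\<in>B. u v *\<^sub>R v) = 0" using r ab1 ab2 ab3 by simp
    have "\<not> dependent B" using B(2) by simp
    then have "\<forall>v\<in>B. u v = 0"
      using real_vector.dependent_finite[of B] s0 xyz by auto
    then show "r1 = 0 \<and> r2 = 0 \<and> r3 = 0" using xyz by (auto simp: u_def split: if_splits)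
  qed
qed

end

lemma N1_add: assumes "set_integrable lborel {0..L} f" "set_integrable lborel {0..L} h"
  shows "N1 L (\<lambda>s. f s + h s) \<le> N1 L f + N1 L h"
proof -
  have "N1 L (\<lambda>s. f s + h s) \<le> (LINT s:{0..L}|lborel. \<bar>f s\<bar> + \<bar>h s\<bar>)"
    unfolding N1_def
    by (rule set_integral_mono) (use assms in \<open>auto intro!: set_integrable_abs set_integral_add\<close>)
  also have "\<dots> = N1 L f + N1 L h"
    unfolding N1_def using set_integrable_abs[OF assms(1)] set_integrable_abs[OF assms(2)] by simp
  finally show ?thesis .
qed

lemma N1_cmult: "N1 L (\<lambda>s. c * f s) = \<bar>c\<bar> * N1 L f"
  unfolding N1_def by (simp add: abs_mult)

lemma sq_expand: assumes "L2 L f" "L2 L h"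
  shows "(LINT s:{0..L}|lborel. (f s + h s)^2) = (LINT s:{0..L}|lborel. (f s)^2) + 2 * (LINT s:{0..L}|lborel. f s * h s) + (LINT s:{0..L}|lborel. (h s)^2)"
proof -
  have i1: "set_integrable lborel {0..L} (\<lambda>s. (f s)^2)" "set_integrable lborel {0..L} (\<lambda>s. (h s)^2)"
    using assms by (auto simp: L2_def)
  have i2: "set_integrable lborel {0..L} (\<lambda>s. f s * h s)" by (rule L2_prod[OF assms])
  have "(LINT s:{0..L}|lborel. (f s + h s)^2) = (LINT s:{0..L}|lborel. (f s)^2 + 2 * (f s * h s) + (h s)^2)"
    by (rule set_lebesgue_integral_cong) (auto simp: power2_eq_square algebra_simps)
  also have "\<dots> = (LINT s:{0..L}|lborel. (f s)^2) + 2 * (LINT s:{0..L}|lborel. f s * h s) + (LINT s:{0..L}|lborel. (h s)^2)"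
    using i1 i2 by simp
  finally show ?thesis .
qed

lemma sq4: "(a + b + c + (d::real))^2 \<le> 4 * (a^2 + b^2 + c^2 + d^2)"
proof -
  have "0 \<le> (a-b)^2 + (a-c)^2 + (a-d)^2 + (b-c)^2 + (b-d)^2 + (c-d)^2" by simp
  then show ?thesis by (simp add: power2_eq_square algebra_simps)
qed

locale mreg = mini +
  fixes a1 b1 a2 b2 a3 b3 :: real
  assumes bnd: "0 \<le> a1" "a1 \<le> b1" "b1 \<le> L" "0 \<le> a2" "a2 \<le> b2" "b2 \<le> L" "0 \<le> a3" "a3 \<le> b3" "b3 \<le> L"
    and inj3: "\<And>r1 r2 r3. r1 *\<^sub>R DGv L g (psi a1 b1) + r2 *\<^sub>R DGv L g (psi a2 b2) + r3 *\<^sub>R DGv L g (psi a3 b3) = 0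
        \<Longrightarrow> r1 = 0 \<and> r2 = 0 \<and> r3 = 0"
begin

abbreviation "\<psi>1 \<equiv> psi a1 b1"
abbreviation "\<psi>2 \<equiv> psi a2 b2"
abbreviation "\<psi>3 \<equiv> psi a3 b3"

definition comb :: "v3 \<Rightarrow> real \<Rightarrow> real" where
  "comb \<rho> t = fst \<rho> * \<psi>1 t + fst (snd \<rho>) * \<psi>2 t + snd (snd \<rho>) * \<psi>3 t"

definition m :: "v3 \<Rightarrow> v3" where
  "m \<rho> = fst \<rho> *\<^sub>R DGv L g \<psi>1 + fst (snd \<rho>) *\<^sub>R DGv L g \<psi>2 + snd (snd \<rho>) *\<^sub>R DGv L g \<psi>3"

definition Jd :: "(real \<Rightarrow> real) \<Rightarrow> real" where
  "Jd \<phi> = (LINT s:{0..L}|lborel. g s * \<phi> s)"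

definition ell :: "v3 \<Rightarrow> real" where
  "ell \<rho> = fst \<rho> * Jd \<psi>1 + fst (snd \<rho>) * Jd \<psi>2 + snd (snd \<rho>) * Jd \<psi>3"

lemma m_linear: "linear m"
  by (rule linearI) (auto simp: m_def algebra_simps)

lemma ell_linear: "linear ell"
  by (rule linearI) (auto simp: ell_def algebra_simps)

lemma m_inj: "inj m"
proof -
  have "\<forall>x. m x = 0 \<longrightarrow> x = 0"
  proof (intro allI impI)
    fix x :: v3 assume "m x = 0"
    then have "fst x = 0 \<and> fst (snd x) = 0 \<and> snd (snd x) = 0" unfolding m_def by (rule inj3)
    then show "x = 0" by (cases x) (auto simp: zero_prod_def)
  qed
  then show ?thesis using linear_injective_0[OF m_linear] by simp
qed

definition mi :: "v3 \<Rightarrow> v3" where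
  "mi = (SOME f'. linear f' \<and> (\<forall>x. f' (m x) = x) \<and> (\<forall>x. m (f' x) = x))"

lemma mi: "linear mi" "\<And>x. mi (m x) = x" "\<And>x. m (mi x) = x"
proof -
  have "\<exists>f'. linear f' \<and> (\<forall>x. f' (m x) = x) \<and> (\<forall>x. m (f' x) = x)"
    by (rule linear_injective_isomorphism[OF m_linear m_inj]) simp
  then have "linear mi \<and> (\<forall>x. mi (m x) = x) \<and> (\<forall>x. m (mi x) = x)"
    unfolding mi_def by (rule someI_ex)
  then show "linear mi" "\<And>x. mi (m x) = x" "\<And>x. m (mi x) = x" by auto
qed

definition Lam :: "v3 \<Rightarrow> real" where "Lam v = ell (mi v)"

lemma Lam_linear: "linear Lam"
  unfolding Lam_def[abs_def] using linear_compose[OF mi(1) ell_linear] by (simp add: o_def)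

lemma Lam_m: "Lam (m \<rho>) = ell \<rho>" by (simp add: Lam_def mi)

lemma psi_L1: "set_integrable lborel {0..L} (psi a b)" by (rule L2_L1[OF psi_L2])
lemma psi_m: "psi a b \<in> borel_measurable borel" using psi_L2 by (simp add: L2_def)

lemma comb_L2: "L2 L (comb \<rho>)"
  unfolding comb_def[abs_def] by (intro L2_add L2_cmult psi_L2)

lemma DG_comb: "DGv L g (comb \<rho>) = m \<rho>"
proof -
  have i: "set_integrable lborel {0..L} (\<lambda>t. c * psi a b t)" for c a b using psi_L1 by simp
  show ?thesis
    unfolding comb_def[abs_def] m_def
    by (simp add: DGv_add[OF gL1] i set_integral_add DGv_cmult)
qed

lemma Jd_comb: "Jd (comb \<rho>) = ell \<rho>"
proof -
  have i: "set_integrable lborel {0..L} (\<lambda>t. g t * psi a b t)" for a b by (rule L2_prod[OF gL2 psi_L2])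
  have "Jd (comb \<rho>) = (LINT s:{0..L}|lborel. fst \<rho> * (g s * \<psi>1 s) + fst (snd \<rho>) * (g s * \<psi>2 s) + snd (snd \<rho>) * (g s * \<psi>3 s))"
    unfolding Jd_def comb_def by (rule set_lebesgue_integral_cong) (auto simp: algebra_simps)
  also have "\<dots> = ell \<rho>" using i by (simp add: ell_def Jd_def)
  finally show ?thesis .
qed

lemma N1_comb: "N1 L (comb \<rho>) \<le> norm \<rho> * (N1 L \<psi>1 + N1 L \<psi>2 + N1 L \<psi>3)"
proof -
  obtain r1 r2 r3 where r: "\<rho> = (r1, r2, r3)" by (cases \<rho>) auto
  have "N1 L (comb \<rho>) \<le> N1 L (\<lambda>t. r1 * \<psi>1 t) + N1 L (\<lambda>t. r2 * \<psi>2 t) + N1 L (\<lambda>t. r3 * \<psi>3 t)"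
    unfolding comb_def r fst_conv snd_conv
    by (rule order_trans[OF N1_add]) (auto intro!: set_integral_add N1_add simp: psi_L1)
  also have "\<dots> = \<bar>r1\<bar> * N1 L \<psi>1 + \<bar>r2\<bar> * N1 L \<psi>2 + \<bar>r3\<bar> * N1 L \<psi>3" by (simp add: N1_cmult)
  also have "\<dots> \<le> norm \<rho> * N1 L \<psi>1 + norm \<rho> * N1 L \<psi>2 + norm \<rho> * N1 L \<psi>3"
    unfolding r using abs_le_norm_triple[where a=r1 and b=r2 and c=r3] N1_nonneg
    by (intro add_mono mult_right_mono) auto
  finally show ?thesis by (simp add: algebra_simps)
qed

end

context mreg begin

lemma Jd_lin: assumes "L2 L f" "L2 L h"
  shows "Jd (\<lambda>s. a * f s + h s) = a * Jd f + Jd h"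
  unfolding Jd_def
proof -
  have i: "set_integrable lborel {0..L} (\<lambda>s. g s * f s)" "set_integrable lborel {0..L} (\<lambda>s. g s * h s)"
    using L2_prod[OF gL2 assms(1)] L2_prod[OF gL2 assms(2)] .
  have "(LINT s:{0..L}|lborel. g s * (a * f s + h s)) = (LINT s:{0..L}|lborel. a * (g s * f s) + g s * h s)"
    by (rule set_lebesgue_integral_cong) (auto simp: algebra_simps)
  also have "\<dots> = a * (LINT s:{0..L}|lborel. g s * f s) + (LINT s:{0..L}|lborel. g s * h s)"
    using i by simp
  finally show "(LINT s:{0..L}|lborel. g s * (a * f s + h s)) = a * (LINT s:{0..L}|lborel. g s * f s) + (LINT s:{0..L}|lborel. g s * h s)" .
qed

lemma E_nonneg: fixes f :: "real \<Rightarrow> real" shows "0 \<le> (LINT s:{0..L}|lborel. (f s)^2)"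
  unfolding set_lebesgue_integral_def by (rule integral_nonneg_AE) (auto simp: indicator_def)

lemma FOC:
  assumes dL2: "L2 L d" and dnn: "AE s in lborel. s \<in> {0..L} \<longrightarrow> 0 \<le> g s + d s"
  shows "Lam (DGv L g d) \<le> Jd d"
proof (rule ccontr)
  assume ne: "\<not> Lam (DGv L g d) \<le> Jd d"
  define \<eta> where "\<eta> = Lam (DGv L g d) - Jd d"
  have \<eta>: "\<eta> > 0" using ne by (simp add: \<eta>_def)
  obtain Km where Km: "Km > 0" "\<And>x. norm (mi x) \<le> norm x * Km"
    using bounded_linear.pos_bounded[OF linear_conv_bounded_linear[THEN iffD1, OF mi(1)]] by auto
  obtain KL where KL: "KL > 0" "\<And>x. norm (Lam x) \<le> norm x * KL"
    using bounded_linear.pos_bounded[OF linear_conv_bounded_linear[THEN iffD1, OF Lam_linear]] by auto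
  have dL1: "set_integrable lborel {0..L} d" using L2_L1[OF dL2] .
  have dm: "d \<in> borel_measurable borel" using dL2 by (simp add: L2_def)
  define c where "c = mi (DGv L g d)"
  define nc where "nc = norm c"
  define Nd where "Nd = N1 L d"
  define Np where "Np = N1 L \<psi>1 + N1 L \<psi>2 + N1 L \<psi>3"
  define Ed where "Ed = (LINT s:{0..L}|lborel. (d s)^2)"
  define Ep where "Ep = (LINT s:{0..L}|lborel. (\<psi>1 s)^2) + (LINT s:{0..L}|lborel. (\<psi>2 s)^2) + (LINT s:{0..L}|lborel. (\<psi>3 s)^2)"
  define CR where "CR = 2 * L"
  define A where "A = Nd + (nc + 1) * Np"
  define K where "K = Km * CR * A^2 + 1"
  define B where "B = 2 * KL * CR * A^2 + 4 * (Ed + (nc+1)^2 * Ep)"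
  define \<tau> where "\<tau> = min (1/K) (min (1 / (4 + 3 * nc)) (\<eta> / (B + 1)))"
  have nc0: "0 \<le> nc" by (simp add: nc_def)
  have Nd0: "0 \<le> Nd" by (simp add: Nd_def N1_nonneg)
  have Np0: "0 \<le> Np" by (simp add: Np_def N1_nonneg add_nonneg_nonneg)
  have Ed0: "0 \<le> Ed" by (simp add: Ed_def E_nonneg)
  have Ep0: "0 \<le> Ep" by (simp add: Ep_def E_nonneg add_nonneg_nonneg)
  have CR0: "0 \<le> CR" using Lpos by (simp add: CR_def)
  have A0: "0 \<le> A" using Nd0 Np0 nc0 by (simp add: A_def)
  have K1: "1 \<le> K" using Km CR0 by (simp add: K_def)
  have B0: "0 \<le> B" using KL CR0 Ed0 Ep0 by (simp add: B_def)
  have \<tau>0: "0 < \<tau>" using K1 nc0 \<eta> B0 by (simp add: \<tau>_def)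
  have t1: "\<tau> \<le> 1/K" "\<tau> \<le> 1/(4 + 3 * nc)" "\<tau> \<le> \<eta>/(B + 1)" by (simp_all add: \<tau>_def)
  have \<tau>K: "\<tau> * K \<le> 1" using t1(1) K1 by (simp add: le_divide_eq)
  have \<tau>nc: "\<tau> * (4 + 3 * nc) \<le> 1" using t1(2) nc0 by (simp add: le_divide_eq)
  have \<tau>B: "\<tau> * (B + 1) \<le> \<eta>" using t1(3) B0 by (simp add: le_divide_eq)
  define \<phi> where "\<phi> \<rho> s = \<tau> * d s + comb \<rho> s" for \<rho> s
  define F where "F \<rho> = mi (Gv L (\<lambda>s. g s + \<phi> \<rho> s) - Gv L g)" for \<rho>
  define r where "r = K * \<tau>^2"
  have r0: "0 < r" using K1 \<tau>0 by (simp add: r_def)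
  have r\<tau>: "r \<le> \<tau>" using mult_right_mono[OF \<tau>K less_imp_le[OF \<tau>0]] by (simp add: r_def power2_eq_square mult_ac)
  have \<phi>L2: "L2 L (\<phi> \<rho>)" for \<rho> unfolding \<phi>_def[abs_def] by (intro L2_add L2_cmult dL2 comb_L2)
  have \<phi>L1: "set_integrable lborel {0..L} (\<phi> \<rho>)" for \<rho> using L2_L1[OF \<phi>L2] .
  have DG\<phi>: "DGv L g (\<phi> \<rho>) = \<tau> *\<^sub>R DGv L g d + m \<rho>" for \<rho>
  proof -
    have "DGv L g (\<phi> \<rho>) = DGv L g (\<lambda>s. \<tau> * d s) + DGv L g (comb \<rho>)"
      unfolding \<phi>_def[abs_def] by (rule DGv_add[OF gL1]) (use dL1 L2_L1[OF comb_L2] in auto)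
    then show ?thesis by (simp add: DGv_cmult DG_comb)
  qed
  have normb: "norm \<rho> \<le> \<tau> * (nc + 1)" if "\<rho> \<in> cball (- (\<tau> *\<^sub>R c)) r" for \<rho>
  proof -
    have "norm (\<rho> + \<tau> *\<^sub>R c) \<le> r" using that by (simp add: dist_norm norm_minus_commute)
    moreover have "norm \<rho> \<le> norm (\<rho> + \<tau> *\<^sub>R c) + norm (\<tau> *\<^sub>R c)" using norm_triangle_ineq4[of "\<rho> + \<tau> *\<^sub>R c" "\<tau> *\<^sub>R c"] by simp
    moreover have "norm (\<tau> *\<^sub>R c) = \<tau> * nc" using \<tau>0 by (simp add: nc_def)
    ultimately show ?thesis using r\<tau> by (simp add: algebra_simps)
  qed
  have N1\<phi>: "N1 L (\<phi> \<rho>) \<le> \<tau> * A" if "norm \<rho> \<le> \<tau> * (nc + 1)" for \<rho>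
  proof -
    have "N1 L (\<phi> \<rho>) \<le> N1 L (\<lambda>s. \<tau> * d s) + N1 L (comb \<rho>)"
      unfolding \<phi>_def by (rule N1_add) (use dL1 L2_L1[OF comb_L2] in auto)
    also have "\<dots> \<le> \<tau> * Nd + norm \<rho> * Np"
      using N1_comb[of \<rho>] \<tau>0 by (simp add: N1_cmult Nd_def Np_def)
    also have "\<dots> \<le> \<tau> * Nd + \<tau> * (nc + 1) * Np"
      using that Np0 by (intro add_left_mono mult_right_mono) auto
    finally show ?thesis by (simp add: A_def algebra_simps)
  qed
  have Rb: "norm (Gv L (\<lambda>s. g s + \<phi> \<rho> s) - Gv L g - DGv L g (\<phi> \<rho>)) \<le> CR * \<tau>^2 * A^2"
    if "norm \<rho> \<le> \<tau> * (nc + 1)" for \<rho>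
  proof -
    have "norm (Gv L (\<lambda>s. g s + \<phi> \<rho> s) - Gv L g - DGv L g (\<phi> \<rho>)) \<le> 2 * L * (N1 L (\<phi> \<rho>))^2"
      by (rule remainder[OF gL1 \<phi>L1]) (use Lpos in auto)
    also have "\<dots> \<le> CR * (\<tau> * A)^2"
      unfolding CR_def using N1\<phi>[OF that] N1_nonneg Lpos
      by (intro mult_left_mono power_mono) auto
    finally show ?thesis by (simp add: power_mult_distrib)
  qed
  have Fcont: "continuous_on (cball (- (\<tau> *\<^sub>R c)) r) F"
  proof (rule lipschitz_on_continuous_on[where L="Km * (1 + 2 * L) * Np"], rule lipschitz_onI)
    fix x y assume "x \<in> cball (- (\<tau> *\<^sub>R c)) r" "y \<in> cball (- (\<tau> *\<^sub>R c)) r"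
    have e: "F x - F y = mi (Gv L (\<lambda>s. g s + \<phi> x s) - Gv L (\<lambda>s. g s + \<phi> y s))"
      unfolding F_def by (simp add: linear_diff[OF mi(1), symmetric])
    have gx: "set_integrable lborel {0..L} (\<lambda>s. g s + \<phi> x s)" using gL1 \<phi>L1 by (rule set_integral_add)
    have gy: "set_integrable lborel {0..L} (\<lambda>s. g s + \<phi> y s)" using gL1 \<phi>L1 by (rule set_integral_add)
    have "N1 L (\<lambda>s. (g s + \<phi> x s) - (g s + \<phi> y s)) = N1 L (comb (x - y))"
      unfolding N1_def \<phi>_def comb_def by (rule set_lebesgue_integral_cong) (auto simp: algebra_simps)
    also have "\<dots> \<le> norm (x - y) * Np" using N1_comb[of "x - y"] by (simp add: Np_def)
    finally have n: "N1 L (\<lambda>s. (g s + \<phi> x s) - (g s + \<phi> y s)) \<le> norm (x - y) * Np" .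
    have "dist (F x) (F y) \<le> norm (Gv L (\<lambda>s. g s + \<phi> x s) - Gv L (\<lambda>s. g s + \<phi> y s)) * Km"
      unfolding dist_norm e by (rule Km(2))
    also have "\<dots> \<le> ((1 + 2 * L) * (norm (x - y) * Np)) * Km"
      using Gv_lip[OF gx gy] Lpos Km(1) n
      by (intro mult_right_mono order_trans[OF Gv_lip[OF gx gy]] mult_left_mono) auto
    finally show "dist (F x) (F y) \<le> Km * (1 + 2 * L) * Np * dist x y" by (simp add: dist_norm algebra_simps)
  qed (use Km Lpos Np0 in auto)
  have "\<exists>y\<in>cball (- (\<tau> *\<^sub>R c)) r. F y = 0"
  proof (rule brouwer_surjective_cball[OF Fcont r0, of 0 "{0}"])
    fix x y assume x: "x \<in> {0::v3}" and y: "y \<in> cball (- (\<tau> *\<^sub>R c)) r"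
    have ny: "norm y \<le> \<tau> * (nc + 1)" by (rule normb[OF y])
    define R where "R = Gv L (\<lambda>s. g s + \<phi> y s) - Gv L g - DGv L g (\<phi> y)"
    have "Gv L (\<lambda>s. g s + \<phi> y s) - Gv L g = \<tau> *\<^sub>R DGv L g d + m y + R"
      by (simp add: R_def DG\<phi>)
    then have "F y = \<tau> *\<^sub>R c + y + mi R"
      unfolding F_def c_def by (simp add: linear_add[OF mi(1)] linear_scale[OF mi(1)] mi(2))
    then have e: "x + (y - F y) = - (\<tau> *\<^sub>R c) - mi R" using x by simp
    have "norm (mi R) \<le> norm R * Km" by (rule Km(2))
    also have "\<dots> \<le> (CR * \<tau>^2 * A^2) * Km"
      using Rb[OF ny] Km(1) by (simp add: R_def)
    also have "\<dots> \<le> r" using Km(1) \<tau>0 by (simp add: r_def K_def algebra_simps)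
    finally show "x + (y - F y) \<in> cball (- (\<tau> *\<^sub>R c)) r" unfolding e by (simp add: dist_norm)
  qed auto
  then obtain \<rho> where \<rho>: "\<rho> \<in> cball (- (\<tau> *\<^sub>R c)) r" "F \<rho> = 0" by auto
  have n\<rho>: "norm \<rho> \<le> \<tau> * (nc + 1)" by (rule normb[OF \<rho>(1)])
  define f where "f s = g s + \<phi> \<rho> s" for s
  have Gf: "Gv L f = Gv L g"
  proof -
    have "m (F \<rho>) = Gv L f - Gv L g" unfolding F_def f_def[abs_def] by (simp add: mi(3))
    then show ?thesis using \<rho>(2) linear_0[OF m_linear] by simp
  qed
  have fL2: "L2 L f" unfolding f_def[abs_def] by (intro L2_add gL2 \<phi>L2)
  obtain r1 r2 r3 where r123: "\<rho> = (r1, r2, r3)" by (cases \<rho>) auto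
  have ri: "\<bar>r1\<bar> \<le> \<tau> * (nc + 1)" "\<bar>r2\<bar> \<le> \<tau> * (nc + 1)" "\<bar>r3\<bar> \<le> \<tau> * (nc + 1)"
    using abs_le_norm_triple[where a=r1 and b=r2 and c=r3] n\<rho> r123 by auto
  have fnn: "AE s in lborel. s \<in> {0..L} \<longrightarrow> 0 \<le> f s"
    using gnn dnn
  proof eventually_elim
    case (elim s)
    show ?case
    proof
      assume s: "s \<in> {0..L}"
      then have g0: "0 \<le> g s" and gd: "0 \<le> g s + d s" using elim by auto
      have "f s = (1 - \<tau>) * g s + \<tau> * (g s + d s) + g s * (r1 * indicator {a1..b1} s + r2 * indicator {a2..b2} s + r3 * indicator {a3..b3} s)"
        by (simp add: f_def \<phi>_def comb_def psi_def r123 algebra_simps)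
      moreover have "- (\<bar>r1\<bar> + \<bar>r2\<bar> + \<bar>r3\<bar>) \<le> r1 * indicator {a1..b1} s + r2 * indicator {a2..b2} s + r3 * indicator {a3..b3} s"
        by (auto simp: indicator_def)
      moreover have "\<bar>r1\<bar> + \<bar>r2\<bar> + \<bar>r3\<bar> \<le> 1 - \<tau>" using ri \<tau>nc by (simp add: algebra_simps)
      ultimately have "f s \<ge> (1 - \<tau>) * g s + \<tau> * (g s + d s) + g s * (- (1 - \<tau>))"
        using g0 by (smt (verit) mult_left_mono)
      moreover have "0 \<le> \<tau> * (g s + d s)" using \<tau>0 gd by simp
      ultimately show "0 \<le> f s" by (simp add: algebra_simps)
    qed
  qed
  have min: "(LINT s:{0..L}|lborel. (g s)^2) \<le> (LINT s:{0..L}|lborel. (f s)^2)"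
    by (rule gmin[OF fL2 fnn Gf])
  have exp: "(LINT s:{0..L}|lborel. (f s)^2) = (LINT s:{0..L}|lborel. (g s)^2) + 2 * Jd (\<phi> \<rho>) + (LINT s:{0..L}|lborel. (\<phi> \<rho> s)^2)"
    unfolding f_def Jd_def by (rule sq_expand[OF gL2 \<phi>L2])
  define R where "R = Gv L f - Gv L g - DGv L g (\<phi> \<rho>)"
  have Rb': "norm R \<le> CR * \<tau>^2 * A^2" unfolding R_def f_def[abs_def] by (rule Rb[OF n\<rho>])
  have Jd\<phi>: "Jd (\<phi> \<rho>) = - \<tau> * \<eta> - Lam R"
  proof -
    have "Jd (\<phi> \<rho>) = \<tau> * Jd d + Jd (comb \<rho>)" unfolding \<phi>_def[abs_def] by (rule Jd_lin[OF dL2 comb_L2])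
    also have "Jd (comb \<rho>) = Lam (m \<rho>)" by (simp add: Jd_comb Lam_m)
    also have "m \<rho> = - R - \<tau> *\<^sub>R DGv L g d" using Gf by (simp add: R_def DG\<phi>)
    also have "Lam (- R - \<tau> *\<^sub>R DGv L g d) = - Lam R - \<tau> * Lam (DGv L g d)"
      by (simp add: linear_diff[OF Lam_linear] linear_neg[OF Lam_linear] linear_scale[OF Lam_linear])
    finally show ?thesis by (simp add: \<eta>_def algebra_simps)
  qed
  have LR: "- Lam R \<le> KL * CR * \<tau>^2 * A^2"
  proof -
    have "\<bar>Lam R\<bar> \<le> norm R * KL" using KL(2)[of R] by simp
    also have "\<dots> \<le> (CR * \<tau>^2 * A^2) * KL" using Rb' KL(1) by (intro mult_right_mono) auto
    finally show ?thesis by (simp add: algebra_simps)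
  qed
  have E\<phi>: "(LINT s:{0..L}|lborel. (\<phi> \<rho> s)^2) \<le> 4 * \<tau>^2 * (Ed + (nc+1)^2 * Ep)"
  proof -
    have sq: "set_integrable lborel {0..L} (\<lambda>s. (h s)^2)" if "L2 L h" for h using that by (simp add: L2_def)
    define E1 where "E1 = (LINT s:{0..L}|lborel. (\<psi>1 s)^2)"
    define E2 where "E2 = (LINT s:{0..L}|lborel. (\<psi>2 s)^2)"
    define E3 where "E3 = (LINT s:{0..L}|lborel. (\<psi>3 s)^2)"
    have iR: "set_integrable lborel {0..L} (\<lambda>s. 4 * (\<tau>^2 * (d s)^2 + r1^2 * (\<psi>1 s)^2 + r2^2 * (\<psi>2 s)^2 + r3^2 * (\<psi>3 s)^2))"
      using sq[OF dL2] sq[OF psi_L2] by (intro set_integrable_mult_right set_integral_add) auto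
    have "(LINT s:{0..L}|lborel. (\<phi> \<rho> s)^2) \<le> (LINT s:{0..L}|lborel. 4 * (\<tau>^2 * (d s)^2 + r1^2 * (\<psi>1 s)^2 + r2^2 * (\<psi>2 s)^2 + r3^2 * (\<psi>3 s)^2))"
    proof (rule set_integral_mono[OF sq[OF \<phi>L2] iR])
      fix s
      have "(\<phi> \<rho> s)^2 = (\<tau> * d s + r1 * \<psi>1 s + r2 * \<psi>2 s + r3 * \<psi>3 s)^2"
        by (simp add: \<phi>_def comb_def r123 add.assoc)
      also have "\<dots> \<le> 4 * ((\<tau> * d s)^2 + (r1 * \<psi>1 s)^2 + (r2 * \<psi>2 s)^2 + (r3 * \<psi>3 s)^2)" by (rule sq4)
      finally show "(\<phi> \<rho> s)^2 \<le> 4 * (\<tau>^2 * (d s)^2 + r1^2 * (\<psi>1 s)^2 + r2^2 * (\<psi>2 s)^2 + r3^2 * (\<psi>3 s)^2)"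
        by (simp add: power_mult_distrib)
    qed
    also have "\<dots> = 4 * (\<tau>^2 * Ed + r1^2 * E1 + r2^2 * E2 + r3^2 * E3)"
      using sq[OF dL2] sq[OF psi_L2] by (simp add: Ed_def E1_def E2_def E3_def set_integrable_mult_right)
    also have "\<dots> \<le> 4 * (\<tau>^2 * Ed + (\<tau> * (nc + 1))^2 * E1 + (\<tau> * (nc + 1))^2 * E2 + (\<tau> * (nc + 1))^2 * E3)"
    proof -
      have "r^2 \<le> (\<tau> * (nc + 1))^2" if "\<bar>r\<bar> \<le> \<tau> * (nc + 1)" for r
        using that by (metis abs_ge_zero power2_abs power_mono)
      then show ?thesis using ri E_nonneg[of \<psi>1] E_nonneg[of \<psi>2] E_nonneg[of \<psi>3]
        unfolding E1_def E2_def E3_def by (intro mult_left_mono add_mono mult_right_mono) auto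
    qed
    also have "\<dots> = 4 * \<tau>^2 * (Ed + (nc+1)^2 * Ep)"
      by (simp only: power_mult_distrib Ep_def E1_def E2_def E3_def) (simp add: algebra_simps)
    finally show ?thesis .
  qed
  have "(LINT s:{0..L}|lborel. (f s)^2) - (LINT s:{0..L}|lborel. (g s)^2) \<le> - 2 * \<tau> * \<eta> + \<tau>^2 * B"
    using exp Jd\<phi> LR E\<phi> by (simp add: B_def algebra_simps power2_eq_square)
  also have "\<dots> < 0"
  proof -
    have "\<tau> * B \<le> \<eta>" using \<tau>B \<tau>0 by (simp add: algebra_simps)
    then have "\<tau>^2 * B \<le> \<tau> * \<eta>" using \<tau>0 by (simp add: power2_eq_square mult.assoc mult_left_mono)
    moreover have "0 < \<tau> * \<eta>" using \<tau>0 \<eta> by simp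
    ultimately show ?thesis by (simp add: algebra_simps)
  qed
  finally show False using min by simp
qed

end

context mreg begin

lemma Lam_expand: "Lam (x, y, z) = x * Lam (1,0,0) + y * Lam (0,1,0) + z * Lam (0,0,1)"
proof -
  have e: "(x, y, z) = x *\<^sub>R (1,0,0) + y *\<^sub>R (0,1,0) + z *\<^sub>R (0::real,0::real,1::real)" by simp
  have "Lam (x, y, z) = Lam (x *\<^sub>R (1,0,0) + y *\<^sub>R (0,1,0) + z *\<^sub>R (0,0,1))" by (subst e) (rule refl)
  also have "\<dots> = x * Lam (1,0,0) + y * Lam (0,1,0) + z * Lam (0,0,1)"
    by (simp only: linear_add[OF Lam_linear] linear_scale[OF Lam_linear] real_scaleR_def)
  finally show ?thesis .
qed

lemma Lam_DG: assumes "L2 L \<phi>"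
  shows "Lam (DGv L g \<phi>) = (LINT t:{0..L}|lborel. \<phi> t * PP (Lam (1,0,0)) (Lam (0,1,0)) (Lam (0,0,1)) t)"
proof -
  obtain x y z where xyz: "DGv L g \<phi> = (x, y, z)" by (cases "DGv L g \<phi>") auto
  have "Lam (DGv L g \<phi>) = (Lam (1,0,0), Lam (0,1,0), Lam (0,0,1)) \<bullet> DGv L g \<phi>"
    unfolding xyz by (subst Lam_expand) (simp add: inner_prod_def algebra_simps)
  also have "\<dots> = (LINT t:{0..L}|lborel. \<phi> t * PP (Lam (1,0,0)) (Lam (0,1,0)) (Lam (0,0,1)) t)"
    by (rule DG_inner[OF assms])
  finally show ?thesis .
qed

lemma key_ineq: "(w - u) * (u - v) \<le> - ((u - w)^2)" if "0 \<le> u" "w = max v (0::real)" for u v w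
proof (cases "v \<ge> 0")
  case True then show ?thesis using that by (simp add: power2_eq_square algebra_simps)
next
  case False
  then have "w = 0" using that by simp
  moreover have "u * v \<le> 0" using False that(1) by (simp add: mult_nonneg_nonpos)
  ultimately show ?thesis by (simp add: power2_eq_square algebra_simps)
qed

lemma main_ae:
  defines "p \<equiv> PP (Lam (1,0,0)) (Lam (0,1,0)) (Lam (0,0,1))"
  shows "AE s in lborel. s \<in> {0..L} \<longrightarrow> g s = max (p s) 0"
proof -
  have pc: "continuous_on {0..L} p" unfolding p_def by (rule PP_cont)
  have ppc: "continuous_on {0..L} (\<lambda>t. max (p t) 0)" using pc by (intro continuous_intros)
  define d where "d t = indicator {0..L} t * max (p t) 0 - g t" for t
  have dL2: "L2 L d" unfolding d_def[abs_def] by (intro L2_diff L2_cont[OF ppc] gL2)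
  have dnn: "AE s in lborel. s \<in> {0..L} \<longrightarrow> 0 \<le> g s + d s" by (auto simp: d_def)
  have foc: "Lam (DGv L g d) \<le> Jd d" by (rule FOC[OF dL2 dnn])
  have pL2: "L2 L (\<lambda>t. indicator {0..L} t * p t)" by (rule L2_cont[OF pc])
  have i1: "set_integrable lborel {0..L} (\<lambda>t. d t * p t)"
    using L2_prod[OF dL2 pL2] by (rule set_integrable_cong[THEN iffD1, rotated -1]) (auto simp: indicator_def)
  have i2: "set_integrable lborel {0..L} (\<lambda>t. g t * d t)" by (rule L2_prod[OF gL2 dL2])
  have "(LINT t:{0..L}|lborel. d t * p t) \<le> (LINT t:{0..L}|lborel. g t * d t)"
    using foc by (simp add: Lam_DG[OF dL2] Jd_def p_def)
  then have "0 \<le> (LINT t:{0..L}|lborel. d t * (g t - p t))"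
    using i1 i2 by (simp add: right_diff_distrib mult.commute)
  also have "\<dots> \<le> (LINT t:{0..L}|lborel. (- ((g t - max (p t) 0)^2)))"
  proof (rule set_integral_mono_AE)
    show "set_integrable lborel {0..L} (\<lambda>t. d t * (g t - p t))"
      using i1 i2 by (simp add: right_diff_distrib mult.commute)
    have "set_integrable lborel {0..L} (\<lambda>t. (d t)^2)" using dL2 by (simp add: L2_def)
    then have "set_integrable lborel {0..L} (\<lambda>t. (g t - max (p t) 0)^2)"
      by (rule set_integrable_cong[THEN iffD1, rotated -1]) (auto simp: d_def power2_eq_square algebra_simps)
    from set_integrable_mult_right[OF this, of "-1"]
    show "set_integrable lborel {0..L} (\<lambda>t. (- ((g t - max (p t) 0)^2)))" by simp
    show "AE t\<in>{0..L} in lborel. d t * (g t - p t) \<le> (- ((g t - max (p t) 0)^2))"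
      using gnn by eventually_elim (auto simp: d_def intro: key_ineq)
  qed
  finally have ge: "0 \<le> (LINT t:{0..L}|lborel. (- ((g t - max (p t) 0)^2)))" .
  have sqi: "set_integrable lborel {0..L} (\<lambda>t. (g t - max (p t) 0)^2)"
  proof -
    have "set_integrable lborel {0..L} (\<lambda>t. (d t)^2)" using dL2 by (simp add: L2_def)
    then show ?thesis
      by (rule set_integrable_cong[THEN iffD1, rotated -1]) (auto simp: d_def power2_eq_square algebra_simps)
  qed
  have le0: "(LINT t:{0..L}|lborel. (g t - max (p t) 0)^2) \<le> 0"
    using ge set_integral_uminus[OF sqi] by simp
  have isq: "integrable lborel (\<lambda>t. indicator {0..L} t * (g t - max (p t) 0)^2)"
  proof -
    have "set_integrable lborel {0..L} (\<lambda>t. (d t)^2)" using dL2 by (simp add: L2_def)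
    then have "set_integrable lborel {0..L} (\<lambda>t. (g t - max (p t) 0)^2)"
      by (rule set_integrable_cong[THEN iffD1, rotated -1]) (auto simp: d_def power2_eq_square algebra_simps)
    then show ?thesis by (simp add: set_integrable_def)
  qed
  have nn: "0 \<le> (LINT t:{0..L}|lborel. (g t - max (p t) 0)^2)" by (rule E_nonneg)
  have "(LINT t:{0..L}|lborel. (g t - max (p t) 0)^2) = 0" using le0 nn by simp
  then have "(\<integral>t. indicator {0..L} t * (g t - max (p t) 0)^2 \<partial>lborel) = 0"
    by (simp add: set_lebesgue_integral_def)
  then have "AE t in lborel. indicator {0..L} t * (g t - max (p t) 0)^2 = 0"
    using integral_nonneg_eq_0_iff_AE[OF isq] by simp
  then show ?thesis by eventually_elim (auto simp: indicator_def split: if_splits)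
qed

end

context mini begin
lemma exists_mult: "\<exists>l1 l2 l3. AE s in lborel. s \<in> {0..L} \<longrightarrow> g s = max (PP l1 l2 l3 s) 0"
proof -
  obtain a1 b1 a2 b2 a3 b3 where r: "0 \<le> a1" "a1 \<le> b1" "b1 \<le> L" "0 \<le> a2" "a2 \<le> b2" "b2 \<le> L"
    "0 \<le> a3" "a3 \<le> b3" "b3 \<le> L"
    "\<And>r1 r2 r3. r1 *\<^sub>R DGv L g (psi a1 b1) + r2 *\<^sub>R DGv L g (psi a2 b2) + r3 *\<^sub>R DGv L g (psi a3 b3) = 0
        \<Longrightarrow> r1 = 0 \<and> r2 = 0 \<and> r3 = 0"
    by (rule regular, blast)
  interpret mreg \<alpha> L g a1 b1 a2 b2 a3 b3
    by (unfold_locales; fact r)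
  show ?thesis using main_ae by blast
qed
end

lemma Th0g: "Th f 0 = 0"
  unfolding Th_def set_lebesgue_integral_def
proof (rule integral_eq_zero_AE)
  show "AE x in lborel. indicat_real {0..0} x *\<^sub>R f x = 0"
    using AE_lborel_singleton[of 0] by eventually_elim (auto simp: indicator_def)
qed

lemma max0_lip: "\<bar>max a 0 - max b 0\<bar> \<le> \<bar>a - (b::real)\<bar>" by auto

theorem theorem3p1:
  fixes \<alpha> L :: real and \<theta> g :: "real \<Rightarrow> real"
  assumes "0 < \<alpha>" and "\<alpha> \<le> pi / 2"
    and "is_minimizer \<alpha> L \<theta> g"
  defines "x \<equiv> (\<lambda>s. LINT u:{0..s}|lborel. cos (\<theta> u))"
    and "y \<equiv> (\<lambda>s. -1 + (LINT u:{0..s}|lborel. sin (\<theta> u)))"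
  shows "(\<exists>h M. M-lipschitz_on {0..L} h \<and> (AE s in lborel. s \<in> {0..L} \<longrightarrow> g s = h s))
    \<and> (\<exists>lam1 lam2 C. \<forall>s\<in>{0..<L}.
         (\<theta> has_real_derivative
            neg_part (C - lam1 * (y s + 1) - lam2 * x s)) (at s within {0..L}))"
proof -
  have Lpos: "0 < L" and adm: "admissible \<alpha> L \<theta> g"
    and minall: "\<And>L' \<theta>' g'. L' > 0 \<Longrightarrow> admissible \<alpha> L' \<theta>' g' \<Longrightarrow> energy L g \<le> energy L' g'"
    using assms(3) unfolding is_minimizer_def by auto
  have gm: "g \<in> borel_measurable lborel" and gi: "set_integrable lborel {0..L} g"
    and g2: "set_integrable lborel {0..L} (\<lambda>s. (g s)^2)"
    and threp: "\<And>s. s \<in> {0..L} \<Longrightarrow> \<theta> s = \<theta> 0 + (LINT u:{0..s}|lborel. g u)"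
    and gnn: "AE s in lborel. s \<in> {0..L} \<longrightarrow> g s \<ge> 0"
    and th0: "\<theta> 0 = 0" and thL: "\<theta> L = 2 * \<alpha>"
    and thcos: "(LINT u:{0..L}|lborel. cos (\<theta> u)) = sin (2 * \<alpha>)"
    and thsin: "(LINT u:{0..L}|lborel. sin (\<theta> u)) = 1 - cos (2 * \<alpha>)"
    using adm unfolding admissible_def H1_with_deriv_def by auto
  have thg: "\<theta> s = Th g s" if "s \<in> {0..L}" for s using threp[OF that] th0 by (simp add: Th_def)
  have gL2: "L2 L g" using gm g2 by (simp add: L2_def)
  have gcos: "(LINT u:{0..L}|lborel. cos (Th g u)) = sin (2 * \<alpha>)"
    using thcos by (subst set_lebesgue_integral_cong[where g="\<lambda>u. cos (\<theta> u)"]) (auto simp: thg)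
  have gsin: "(LINT u:{0..L}|lborel. sin (Th g u)) = 1 - cos (2 * \<alpha>)"
    using thsin by (subst set_lebesgue_integral_cong[where g="\<lambda>u. sin (\<theta> u)"]) (auto simp: thg)
  have gend: "Th g L = 2 * \<alpha>" using thL thg[of L] Lpos by simp
  interpret mini \<alpha> L g
  proof
    show "0 < L" "0 < \<alpha>" "\<alpha> \<le> pi / 2" "L2 L g" "AE s in lborel. s \<in> {0..L} \<longrightarrow> 0 \<le> g s" "Th g L = 2 * \<alpha>"
      using Lpos assms(1,2) gL2 gnn gend by auto
    fix f assume fL2: "L2 L f" and fnn: "AE s in lborel. s \<in> {0..L} \<longrightarrow> 0 \<le> f s" and Gf: "Gv L f = Gv L g"
    have f1: "set_integrable lborel {0..L} f" by (rule L2_L1[OF fL2])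
    have "admissible \<alpha> L (Th f) f"
      unfolding admissible_def H1_with_deriv_def
    proof (intro conjI ballI)
      show "f \<in> borel_measurable lborel" using fL2 by (simp add: L2_def)
      show "set_integrable lborel {0..L} f" by (rule f1)
      show "set_integrable lborel {0..L} (\<lambda>s. (f s)^2)" using fL2 by (simp add: L2_def)
      show "Th f s = Th f 0 + (LINT u:{0..s}|lborel. f u)" for s by (subst Th0g) (simp add: Th_def)
      show "AE s in lborel. s \<in> {0..L} \<longrightarrow> 0 \<le> f s" by (rule fnn)
      show "Th f 0 = 0" by (rule Th0g)
      have "Th f L = Th g L" using Gf by (simp add: Gv_def Th_def)
      then show "Th f L = 2 * \<alpha>" using gend by simp
      show "(LINT u:{0..L}|lborel. cos (Th f u)) = sin (2 * \<alpha>)" using Gf gcos by (simp add: Gv_def)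
      show "(LINT u:{0..L}|lborel. sin (Th f u)) = 1 - cos (2 * \<alpha>)" using Gf gsin by (simp add: Gv_def)
    qed
    from minall[OF Lpos this] show "(LINT s:{0..L}|lborel. (g s)^2) \<le> (LINT s:{0..L}|lborel. (f s)^2)"
      by (simp add: energy_def)
  qed
  obtain l1 l2 l3 where ae: "AE s in lborel. s \<in> {0..L} \<longrightarrow> g s = max (PP l1 l2 l3 s) 0"
    using exists_mult by blast
  define p where "p = PP l1 l2 l3"
  define pp where "pp s = max (p s) 0" for s
  have pc: "continuous_on {0..L} p" unfolding p_def by (rule PP_cont)
  have ppc: "continuous_on {0..L} pp" unfolding pp_def[abs_def] using pc by (intro continuous_intros)
  have part1: "\<exists>h M. M-lipschitz_on {0..L} h \<and> (AE s in lborel. s \<in> {0..L} \<longrightarrow> g s = h s)"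
  proof (intro exI conjI)
    show "(\<bar>l2\<bar> + \<bar>l3\<bar>)-lipschitz_on {0..L} pp"
    proof (rule lipschitz_onI)
      fix s t assume s: "s \<in> {0..L}" and t: "t \<in> {0..L}"
      have "\<bar>pp s - pp t\<bar> \<le> \<bar>p s - p t\<bar>" unfolding pp_def by (rule max0_lip)
      also have "p s - p t = - l2 * (Sfun L sin g s - Sfun L sin g t) + l3 * (Sfun L cos g s - Sfun L cos g t)"
        by (simp add: p_def PP_def algebra_simps)
      also have "\<bar>\<dots>\<bar> \<le> \<bar>l2\<bar> * \<bar>s - t\<bar> + \<bar>l3\<bar> * \<bar>s - t\<bar>"
      proof -
        have "\<bar>Sfun L sin g s - Sfun L sin g t\<bar> \<le> \<bar>s - t\<bar>"
          by (rule Sfun_lip[OF gL1 s_cont(1) _ s t]) (rule abs_sin_le_one)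
        moreover have "\<bar>Sfun L cos g s - Sfun L cos g t\<bar> \<le> \<bar>s - t\<bar>"
          by (rule Sfun_lip[OF gL1 s_cont(2) _ s t]) (rule abs_cos_le_one)
        ultimately have "\<bar>l2\<bar> * \<bar>Sfun L sin g s - Sfun L sin g t\<bar> \<le> \<bar>l2\<bar> * \<bar>s - t\<bar>"
          "\<bar>l3\<bar> * \<bar>Sfun L cos g s - Sfun L cos g t\<bar> \<le> \<bar>l3\<bar> * \<bar>s - t\<bar>"
          by (auto intro: mult_left_mono)
        moreover have "\<bar>- l2 * (Sfun L sin g s - Sfun L sin g t) + l3 * (Sfun L cos g s - Sfun L cos g t)\<bar>
            \<le> \<bar>l2\<bar> * \<bar>Sfun L sin g s - Sfun L sin g t\<bar> + \<bar>l3\<bar> * \<bar>Sfun L cos g s - Sfun L cos g t\<bar>"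
          using abs_triangle_ineq[of "- l2 * (Sfun L sin g s - Sfun L sin g t)" "l3 * (Sfun L cos g s - Sfun L cos g t)"]
          by (simp add: abs_mult)
        ultimately show ?thesis by linarith
      qed
      finally show "dist (pp s) (pp t) \<le> (\<bar>l2\<bar> + \<bar>l3\<bar>) * dist s t"
        by (simp add: dist_real_def algebra_simps)
    qed simp
    show "AE s in lborel. s \<in> {0..L} \<longrightarrow> g s = pp s" using ae by (simp add: pp_def p_def)
  qed
  define YL where "YL = y L + 1"
  define XL where "XL = x L"
  have part2: "\<forall>s\<in>{0..<L}. (\<theta> has_real_derivative neg_part ((- l1 + l2 * YL - l3 * XL) - l2 * (y s + 1) - (- l3) * x s)) (at s within {0..L})"
  proof
    fix s assume s: "s \<in> {0..<L}"
    then have sL: "s \<in> {0..L}" by auto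
    have ysin: "y t + 1 = Th (\<lambda>u. sin (Th g u)) t" if "t \<in> {0..L}" for t
    proof -
      have "y t + 1 = (LINT u:{0..t}|lborel. sin (\<theta> u))" by (simp add: y_def)
      also have "\<dots> = (LINT u:{0..t}|lborel. sin (Th g u))"
        by (rule set_lebesgue_integral_cong) (use that in \<open>auto simp: thg\<close>)
      also have "\<dots> = Th (\<lambda>u. sin (Th g u)) t" by (rule Th_def[symmetric])
      finally show ?thesis .
    qed
    have xcos: "x t = Th (\<lambda>u. cos (Th g u)) t" if "t \<in> {0..L}" for t
    proof -
      have "x t = (LINT u:{0..t}|lborel. cos (\<theta> u))" by (simp add: x_def)
      also have "\<dots> = (LINT u:{0..t}|lborel. cos (Th g u))"
        by (rule set_lebesgue_integral_cong) (use that in \<open>auto simp: thg\<close>)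
      also have "\<dots> = Th (\<lambda>u. cos (Th g u)) t" by (rule Th_def[symmetric])
      finally show ?thesis .
    qed
    have "p s = l1 - l2 * (YL - (y s + 1)) + l3 * (XL - x s)"
      using Sfun_eq[OF gL1 s_cont(1) sL] Sfun_eq[OF gL1 s_cont(2) sL] ysin[OF sL] xcos[OF sL]
        ysin[of L] xcos[of L] Lpos
      by (simp add: p_def PP_def YL_def XL_def)
    then have ppe: "pp s = neg_part ((- l1 + l2 * YL - l3 * XL) - l2 * (y s + 1) - (- l3) * x s)"
      by (simp add: pp_def neg_part_def algebra_simps)
    have eqTh: "\<theta> t = Th pp t" if "t \<in> {0..L}" for t
    proof -
      have ppm: "(\<lambda>u. indicator {0..L} u * pp u) \<in> borel_measurable borel"
        using borel_measurable_continuous_on_indicator[OF _ ppc] by simp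
      have gmb: "g \<in> borel_measurable borel" using gm by simp
      have "Th g t = (LINT u:{0..t}|lborel. indicator {0..L} u * pp u)"
        unfolding Th_def
        by (rule set_lebesgue_integral_cong_AE[OF _ gmb[folded sets_lborel[THEN measurable_cong_sets, OF refl]] ppm[folded sets_lborel[THEN measurable_cong_sets, OF refl]]]) (use ae that in \<open>auto simp: pp_def p_def elim!: AE_mp\<close>)
      also have "\<dots> = Th pp t"
        unfolding Th_def by (rule set_lebesgue_integral_cong) (use that in auto)
      finally have "Th g t = Th pp t" .
      then show ?thesis using thg[OF that] by simp
    qed
    have "(Th pp has_real_derivative pp s) (at s within {0..L})" by (rule Th_deriv[OF ppc sL])
    then have "(\<theta> has_real_derivative pp s) (at s within {0..L})"
      by (rule has_field_derivative_transform_within[where d=1]) (use sL eqTh in auto)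
    then show "(\<theta> has_real_derivative neg_part ((- l1 + l2 * YL - l3 * XL) - l2 * (y s + 1) - (- l3) * x s)) (at s within {0..L})"
      using ppe by simp
  qed
  show ?thesis using part1 part2 by blast
qed

end
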